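(* Let $d\geq1$ and fix a width $p\geq d+3$. For each $k\in\{1,\ldots,p\}$ let $\{B_{kr}:r\geq1\}$ be a set of basis functions. Let $\sigma:\mathbb{R}\to[0,1]$ be a continuous function which is continuously differentiable at at least one point, with nonzero derivative at that point. For $L\geq1$, vectors $W_k^{(1)}\in\mathbb{R}^d$ and $W_k^{(l)}\in\mathbb{R}^p$ ($2\le l\le L$), integers $q_k\geq1$ and real numbers $c_{kr},b_k^{(l)},b$, define the HDANN2 function on $[0,1]^d$ by $$x_k^{(1)}=\sigma\big({W_k^{(1)}}^\top\mathbf{x}+b_k^{(1)}\big),\qquad x_k^{(l)}=\sigma\big({W_k^{(l)}}^\top\mathbf{x}^{(l-1)}+b_k^{(l)}\big)\ (2\le l\le L),\quad k=1,\ldots,p,$$ where $\mathbf{x}^{(l)}=(x_1^{(l)},\ldots,x_p^{(l)})^\top$, and output $\mathrm{HDANN2}(\mathbf{x})=\sum_{k=1}^p\sum_{r=1}^{q_k}c_{kr}B_{kr}(x_k^{(L)})+b$. Then for any continuous $f:[0,1]^d\to\mathbb{R}$ and any $\epsilon>0$ there exist $L\geq1$, $q_k\geq1$, $W_k^{(l)}$ and $c_{kr},b_k^{(l)},b\in\mathbb{R}$ such that $$\sup_{\mathbf{x}\in[0,1]^d}|f(\mathbf{x})-\mathrm{HDANN2}(\mathbf{x})|<\epsilon.$$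
   Context: A set $\{B_r:[0,1]\to\mathbb{R}\,|\,r\geq1\}$ of functions is called a set of basis functions if for every continuous $\phi:[0,1]\to\mathbb{R}$ and every $\epsilon>0$ there exist $q\geq1$ and $c_1,\ldots,c_q,c\in\mathbb{R}$ with $\sup_{x\in[0,1]}|\phi(x)-(\sum_{r=1}^q c_rB_r(x)+c)|<\epsilon$. *)

theory Defs
  imports "HOL-Analysis.Analysis"
begin

text \<open>A family B r (r \<ge> 1) of functions [0,1] -> R is a set of basis functions.
  The sup-norm bound "sup < eps" is expressed as: some delta < eps bounds the error uniformly.\<close>
definition basis_functions :: "(nat \<Rightarrow> real \<Rightarrow> real) \<Rightarrow> bool" where
  "basis_functions B \<longleftrightarrow>
     (\<forall>\<phi>. continuous_on {0..1} \<phi> \<longrightarrow>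
        (\<forall>\<epsilon>>0. \<exists>q\<ge>1. \<exists>(c::nat \<Rightarrow> real) (c0::real). \<exists>\<delta><\<epsilon>.
           \<forall>x\<in>{0..1::real}. \<bar>\<phi> x - ((\<Sum>r=1..q. c r * B r x) + c0)\<bar> \<le> \<delta>))"

text \<open>Hidden layers. Vectors are functions nat => real, indexed 1..d (input) and 1..p (hidden).
  W l k i is the i-th entry of W_k^(l); bb l k = b_k^(l). Layer 0 is the input.\<close>
primrec hdann_layer ::
  "(real \<Rightarrow> real) \<Rightarrow> nat \<Rightarrow> nat \<Rightarrow> (nat \<Rightarrow> nat \<Rightarrow> nat \<Rightarrow> real) \<Rightarrow> (nat \<Rightarrow> nat \<Rightarrow> real)
   \<Rightarrow> nat \<Rightarrow> (nat \<Rightarrow> real) \<Rightarrow> (nat \<Rightarrow> real)" where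
  "hdann_layer \<sigma> d p W bb 0 x = x"
| "hdann_layer \<sigma> d p W bb (Suc l) x =
     (\<lambda>k. \<sigma> ((\<Sum>j=1..(if l = 0 then d else p). W (Suc l) k j * hdann_layer \<sigma> d p W bb l x j)
              + bb (Suc l) k))"

definition hdann2 ::
  "(real \<Rightarrow> real) \<Rightarrow> nat \<Rightarrow> nat \<Rightarrow> (nat \<Rightarrow> nat \<Rightarrow> real \<Rightarrow> real) \<Rightarrow> nat
   \<Rightarrow> (nat \<Rightarrow> nat \<Rightarrow> nat \<Rightarrow> real) \<Rightarrow> (nat \<Rightarrow> nat \<Rightarrow> real) \<Rightarrow> (nat \<Rightarrow> nat)
   \<Rightarrow> (nat \<Rightarrow> nat \<Rightarrow> real) \<Rightarrow> real \<Rightarrow> (nat \<Rightarrow> real) \<Rightarrow> real" where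
  "hdann2 \<sigma> d p B L W bb q c b x =
     (\<Sum>k=1..p. \<Sum>r=1..q k. c k r * B k r (hdann_layer \<sigma> d p W bb L x k)) + b"

definition unit_cube :: "nat \<Rightarrow> (nat \<Rightarrow> real) set" where
  "unit_cube d = {x. (\<forall>i\<in>{1..d}. 0 \<le> x i \<and> x i \<le> 1) \<and> (\<forall>i. i \<notin> {1..d} \<longrightarrow> x i = 0)}"

end

theory Submission
  imports Defs
begin

lemma antideriv_exists:
  fixes g :: "real \<Rightarrow> real"
  assumes g: "continuous_on UNIV g"
  shows "\<exists>H. \<forall>t. (H has_real_derivative g t) (at t)"
proof -
  define H where "H x = integral {0..x} g - integral {x..0} g" for x
  have int: "g integrable_on {a..b}" for a b
    by (rule integrable_continuous_real) (rule continuous_on_subset[OF g], auto)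
  have Hrep: "H x = integral {a..x} g - integral {a..0} g" if "a \<le> x" "a \<le> 0" for a x
  proof (cases "0 \<le> x")
    case True
    have "integral {a..0} g + integral {0..x} g = integral {a..x} g"
      by (rule Henstock_Kurzweil_Integration.integral_combine) (use that True int in \<open>simp_all\<close>)
    moreover have "integral {x..0} g = 0"
      using True by (cases "x = 0") simp_all
    ultimately show ?thesis unfolding H_def by simp
  next
    case False
    have "integral {a..x} g + integral {x..0} g = integral {a..0} g"
      by (rule Henstock_Kurzweil_Integration.integral_combine) (use that False int in \<open>simp_all\<close>)
    moreover have "integral {0..x} g = 0"
      using False by auto
    ultimately show ?thesis unfolding H_def by simp
  qed
  show ?thesis
  proof (rule exI[of _ H], rule allI)
    fix t :: real
    define a where "a = min 0 t - 1"
    define b where "b = t + 1"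
    have "((\<lambda>x. integral {a..x} g) has_real_derivative g t) (at t within {a..b})"
      by (rule integral_has_real_derivative) (auto intro: continuous_on_subset[OF g] simp: a_def b_def)
    moreover have "t \<in> interior {a..b}" unfolding interior_atLeastAtMost_real by (simp add: a_def b_def)
    ultimately have D1: "((\<lambda>x. integral {a..x} g) has_real_derivative g t) (at t)"
      using at_within_interior[of t "{a..b}"] by metis
    have "((\<lambda>x. integral {a..x} g - integral {a..0} g) has_real_derivative g t) (at t)"
      using DERIV_diff[OF D1 DERIV_const[of "integral {a..0} g" "at t"]] by (simp only: diff_zero)
    then show "(H has_real_derivative g t) (at t)"
      apply (rule has_field_derivative_transform_within_open[where S="{a<..}"])
      apply simp
      apply (simp add: a_def)
      apply (rule Hrep[symmetric])
      apply (auto simp: a_def)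
      done
  qed
qed

definition net1 :: "(real \<Rightarrow> real) \<Rightarrow> (real \<times> real \<times> real) list \<Rightarrow> real \<Rightarrow> real" where
  "net1 \<sigma> xs t = sum_list (map (\<lambda>(a,w,b). a * \<sigma> (w*t+b)) xs)"

definition V1 :: "(real \<Rightarrow> real) \<Rightarrow> (real \<Rightarrow> real) \<Rightarrow> bool" where
  "V1 \<sigma> \<phi> \<longleftrightarrow> (\<forall>R>0. \<forall>\<epsilon>>0. \<exists>c xs. \<forall>t. \<bar>t\<bar> \<le> R \<longrightarrow> \<bar>\<phi> t - (c + net1 \<sigma> xs t)\<bar> \<le> \<epsilon>)"

lemma net1_Nil[simp]: "net1 \<sigma> [] t = 0" by (simp add: net1_def)

lemma net1_append: "net1 \<sigma> (xs@ys) t = net1 \<sigma> xs t + net1 \<sigma> ys t"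
  by (simp add: net1_def)

lemma net1_scale: "net1 \<sigma> (map (\<lambda>(a,w,b). (k*a,w,b)) xs) t = k * net1 \<sigma> xs t"
  by (induction xs) (auto simp: net1_def algebra_simps)

lemma net1_affine: "net1 \<sigma> (map (\<lambda>(a,w,b). (a, w*\<alpha>, w*\<beta>+b)) xs) t = net1 \<sigma> xs (\<alpha>*t+\<beta>)"
  by (induction xs) (auto simp: net1_def algebra_simps)

lemma V1_const: "V1 \<sigma> (\<lambda>t. c)"
  unfolding V1_def by (intro allI impI exI[of _ c] exI[of _ "[]"]) simp

lemma V1_sigma: "V1 \<sigma> (\<lambda>t. \<sigma> (w*t+b))"
  unfolding V1_def by (intro allI impI exI[of _ 0] exI[of _ "[(1,w,b)]"]) (simp add: net1_def)

lemma V1_add: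
  assumes "V1 \<sigma> f" "V1 \<sigma> g"
  shows "V1 \<sigma> (\<lambda>t. f t + g t)"
  unfolding V1_def
proof (intro allI impI)
  fix R \<epsilon> :: real assume R: "R > 0" and e: "\<epsilon> > 0"
  obtain c1 xs1 where 1: "\<forall>t. \<bar>t\<bar> \<le> R \<longrightarrow> \<bar>f t - (c1 + net1 \<sigma> xs1 t)\<bar> \<le> \<epsilon>/2"
    using assms(1) R e unfolding V1_def by (meson half_gt_zero)
  obtain c2 xs2 where 2: "\<forall>t. \<bar>t\<bar> \<le> R \<longrightarrow> \<bar>g t - (c2 + net1 \<sigma> xs2 t)\<bar> \<le> \<epsilon>/2"
    using assms(2) R e unfolding V1_def by (meson half_gt_zero)
  show "\<exists>c xs. \<forall>t. \<bar>t\<bar> \<le> R \<longrightarrow> \<bar>f t + g t - (c + net1 \<sigma> xs t)\<bar> \<le> \<epsilon>"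
  proof (intro exI[of _ "c1+c2"] exI[of _ "xs1@xs2"] allI impI)
    fix t :: real assume "\<bar>t\<bar> \<le> R"
    with 1 2 have "\<bar>f t - (c1 + net1 \<sigma> xs1 t)\<bar> \<le> \<epsilon>/2" "\<bar>g t - (c2 + net1 \<sigma> xs2 t)\<bar> \<le> \<epsilon>/2" by auto
    then show "\<bar>f t + g t - (c1 + c2 + net1 \<sigma> (xs1@xs2) t)\<bar> \<le> \<epsilon>"
      by (unfold net1_append) arith
  qed
qed

lemma V1_scale:
  assumes "V1 \<sigma> f"
  shows "V1 \<sigma> (\<lambda>t. k * f t)"
  unfolding V1_def
proof (intro allI impI)
  fix R \<epsilon> :: real assume R: "R > 0" and e: "\<epsilon> > 0"
  have e': "\<epsilon> / (\<bar>k\<bar>+1) > 0" using e by simp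
  obtain c1 xs1 where 1: "\<forall>t. \<bar>t\<bar> \<le> R \<longrightarrow> \<bar>f t - (c1 + net1 \<sigma> xs1 t)\<bar> \<le> \<epsilon>/(\<bar>k\<bar>+1)"
    using assms(1) R e' unfolding V1_def by meson
  show "\<exists>c xs. \<forall>t. \<bar>t\<bar> \<le> R \<longrightarrow> \<bar>k * f t - (c + net1 \<sigma> xs t)\<bar> \<le> \<epsilon>"
  proof (intro exI[of _ "k*c1"] exI[of _ "map (\<lambda>(a,w,b). (k*a,w,b)) xs1"] allI impI)
    fix t :: real assume "\<bar>t\<bar> \<le> R"
    with 1 have h: "\<bar>f t - (c1 + net1 \<sigma> xs1 t)\<bar> \<le> \<epsilon>/(\<bar>k\<bar>+1)" by auto
    have "\<bar>k * f t - (k*c1 + net1 \<sigma> (map (\<lambda>(a,w,b). (k*a,w,b)) xs1) t)\<bar>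
        = \<bar>k\<bar> * \<bar>f t - (c1 + net1 \<sigma> xs1 t)\<bar>"
      by (simp only: net1_scale) (simp add: abs_mult[symmetric] algebra_simps)
    also have "\<dots> \<le> \<bar>k\<bar> * (\<epsilon>/(\<bar>k\<bar>+1))" by (rule mult_left_mono[OF h]) simp
    also have "\<dots> \<le> \<epsilon>" using e by (simp add: field_simps)
    finally show "\<bar>k * f t - (k*c1 + net1 \<sigma> (map (\<lambda>(a,w,b). (k*a,w,b)) xs1) t)\<bar> \<le> \<epsilon>" .
  qed
qed

lemma V1_affine:
  assumes "V1 \<sigma> f"
  shows "V1 \<sigma> (\<lambda>t. f (\<alpha>*t+\<beta>))"
  unfolding V1_def
proof (intro allI impI)
  fix R \<epsilon> :: real assume R: "R > 0" and e: "\<epsilon> > 0"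
  have R': "\<bar>\<alpha>\<bar>*R + \<bar>\<beta>\<bar> + 1 > 0" using R by (simp add: add_nonneg_pos)
  obtain c1 xs1 where 1: "\<forall>t. \<bar>t\<bar> \<le> \<bar>\<alpha>\<bar>*R + \<bar>\<beta>\<bar> + 1 \<longrightarrow> \<bar>f t - (c1 + net1 \<sigma> xs1 t)\<bar> \<le> \<epsilon>"
    using assms(1) R' e unfolding V1_def by meson
  show "\<exists>c xs. \<forall>t. \<bar>t\<bar> \<le> R \<longrightarrow> \<bar>f (\<alpha>*t+\<beta>) - (c + net1 \<sigma> xs t)\<bar> \<le> \<epsilon>"
  proof (intro exI[of _ "c1"] exI[of _ "map (\<lambda>(a,w,b). (a, w*\<alpha>, w*\<beta>+b)) xs1"] allI impI)
    fix t :: real assume t: "\<bar>t\<bar> \<le> R"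
    have "\<bar>\<alpha>*t+\<beta>\<bar> \<le> \<bar>\<alpha>\<bar>*\<bar>t\<bar> + \<bar>\<beta>\<bar>" by (metis abs_mult abs_triangle_ineq)
    also have "\<dots> \<le> \<bar>\<alpha>\<bar>*R + \<bar>\<beta>\<bar>" using t by (simp add: mult_left_mono)
    finally have "\<bar>\<alpha>*t+\<beta>\<bar> \<le> \<bar>\<alpha>\<bar>*R + \<bar>\<beta>\<bar> + 1" by simp
    with 1 show "\<bar>f (\<alpha>*t+\<beta>) - (c1 + net1 \<sigma> (map (\<lambda>(a,w,b). (a, w*\<alpha>, w*\<beta>+b)) xs1) t)\<bar> \<le> \<epsilon>"
      by (simp add: net1_affine)
  qed
qed

lemma V1_limit:
  assumes "\<And>R \<epsilon>. R > 0 \<Longrightarrow> \<epsilon> > 0 \<Longrightarrow> \<exists>g. V1 \<sigma> g \<and> (\<forall>t. \<bar>t\<bar> \<le> R \<longrightarrow> \<bar>f t - g t\<bar> \<le> \<epsilon>)"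
  shows "V1 \<sigma> f"
  unfolding V1_def
proof (intro allI impI)
  fix R \<epsilon> :: real assume R: "R > 0" and e: "\<epsilon> > 0"
  obtain g where g: "V1 \<sigma> g" "\<forall>t. \<bar>t\<bar> \<le> R \<longrightarrow> \<bar>f t - g t\<bar> \<le> \<epsilon>/2"
    using assms[OF R, of "\<epsilon>/2"] e by auto
  obtain c1 xs1 where 1: "\<forall>t. \<bar>t\<bar> \<le> R \<longrightarrow> \<bar>g t - (c1 + net1 \<sigma> xs1 t)\<bar> \<le> \<epsilon>/2"
    using g(1) R e unfolding V1_def by (meson half_gt_zero)
  show "\<exists>c xs. \<forall>t. \<bar>t\<bar> \<le> R \<longrightarrow> \<bar>f t - (c + net1 \<sigma> xs t)\<bar> \<le> \<epsilon>"
  proof (intro exI[of _ c1] exI[of _ xs1] allI impI)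
    fix t :: real assume "\<bar>t\<bar> \<le> R"
    with 1 g(2) have "\<bar>g t - (c1 + net1 \<sigma> xs1 t)\<bar> \<le> \<epsilon>/2" "\<bar>f t - g t\<bar> \<le> \<epsilon>/2" by auto
    then show "\<bar>f t - (c1 + net1 \<sigma> xs1 t)\<bar> \<le> \<epsilon>" by linarith
  qed
qed

lemma V1_sum:
  assumes "\<And>i. i < (n::nat) \<Longrightarrow> V1 \<sigma> (f i)"
  shows "V1 \<sigma> (\<lambda>t. \<Sum>i<n. f i t)"
  using assms
proof (induction n)
  case 0 then show ?case using V1_const[of \<sigma> 0] by simp
next
  case (Suc n)
  then show ?case using V1_add[of \<sigma> "\<lambda>t. \<Sum>i<n. f i t" "f n"] by simp
qed

lemma V1_diff:
  assumes "V1 \<sigma> f" "V1 \<sigma> g"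
  shows "V1 \<sigma> (\<lambda>t. f t - g t)"
  using V1_add[OF assms(1) V1_scale[OF assms(2), of "-1"]] by simp

lemma V1_riemann:
  assumes g: "continuous_on UNIV g" and Vg: "V1 \<sigma> g"
    and H: "\<And>t. (H has_real_derivative g t) (at t)" and eta: "\<eta> > 0"
  shows "V1 \<sigma> (\<lambda>t. (H (t+\<eta>) - H t)/\<eta>)"
proof (rule V1_limit)
  fix R \<epsilon> :: real assume R: "R > 0" and e: "\<epsilon> > 0"
  have "uniformly_continuous_on {-R..R+\<eta>} g"
    by (rule compact_uniformly_continuous) (auto intro: continuous_on_subset[OF g])
  then obtain \<delta> where d: "\<delta> > 0" and
    dd: "\<And>x y. x \<in> {-R..R+\<eta>} \<Longrightarrow> y \<in> {-R..R+\<eta>} \<Longrightarrow> dist y x < \<delta> \<Longrightarrow> dist (g y) (g x) < \<epsilon>"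
    unfolding uniformly_continuous_on_def using e by metis
  obtain n :: nat where n: "\<eta>/\<delta> < n" using reals_Archimedean2 by blast
  have npos: "n > 0" using n eta d by (metis divide_pos_pos of_nat_0 not_gr_zero order_less_asym)
  define h where "h = \<eta> / n"
  have hpos: "h > 0" using eta npos by (simp add: h_def)
  have hd: "h < \<delta>" using n d npos eta by (simp add: h_def field_simps)
  have nh: "n * h = \<eta>" using npos by (simp add: h_def)
  define \<psi> where "\<psi> t = (\<Sum>i<n. (1/n) * g (1*t + i*h))" for t
  have V\<psi>: "V1 \<sigma> \<psi>"
    unfolding \<psi>_def by (intro V1_sum V1_scale V1_affine Vg)
  have "\<bar>(H (t+\<eta>) - H t)/\<eta> - \<psi> t\<bar> \<le> \<epsilon>" if t: "\<bar>t\<bar> \<le> R" for t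
  proof -
    define F where "F i = H (t + i*h)" for i :: nat
    have tel: "H (t+\<eta>) - H t = (\<Sum>i<n. F (Suc i) - F i)"
      by (subst sum_lessThan_telescope) (simp add: F_def nh)
    have step: "\<bar>(F (Suc i) - F i)/\<eta> - (1/n) * g (1*t + i*h)\<bar> \<le> \<epsilon>/n" if i: "i < n" for i
    proof -
      have "t + i*h < t + Suc i * h" using hpos by (simp add: algebra_simps)
      then obtain z where z: "t + i*h < z" "z < t + Suc i * h"
        and mv: "H (t + Suc i * h) - H (t + i*h) = (t + Suc i * h - (t + i*h)) * g z"
        using MVT2[of "t + i*h" "t + Suc i * h" H g] H by blast
      have "F (Suc i) - F i = h * g z" using mv by (simp add: F_def algebra_simps)
      then have eq: "(F (Suc i) - F i)/\<eta> - (1/n) * g (1*t + i*h) = (g z - g (t + i*h)) / n"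
        using npos eta by (simp add: h_def field_simps)
      have sn: "real (Suc i) \<le> real n" using i by simp
      have "real (Suc i) * h \<le> real n * h" using mult_right_mono[OF sn, of h] hpos by simp
      then have iin: "Suc i * h \<le> \<eta>" using nh by simp
      have i0: "0 \<le> i * h" using hpos by simp
      have ii: "real i * h \<le> real (Suc i) * h" using hpos by (intro mult_right_mono) simp_all
      have tR: "-R \<le> t" "t \<le> R" using t by auto
      have zin: "z \<in> {-R..R+\<eta>}" unfolding atLeastAtMost_iff using z tR iin i0 ii by linarith
      have tin: "t + i*h \<in> {-R..R+\<eta>}" unfolding atLeastAtMost_iff using tR iin i0 ii by linarith
      have "dist z (t + i*h) < \<delta>" using z hd by (simp add: dist_real_def algebra_simps)
      then have "dist (g z) (g (t + i*h)) < \<epsilon>" using dd[OF tin zin] by blast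
      then have "\<bar>g z - g (t + i*h)\<bar> \<le> \<epsilon>" by (simp add: dist_real_def)
      then show ?thesis unfolding eq using npos by (simp add: divide_right_mono)
    qed
    have "(H (t+\<eta>) - H t)/\<eta> - \<psi> t = (\<Sum>i<n. (F (Suc i) - F i)/\<eta> - (1/n) * g (1*t + i*h))"
      unfolding tel \<psi>_def by (simp add: sum_subtractf sum_divide_distrib[symmetric] diff_divide_distrib)
    also have "\<bar>\<dots>\<bar> \<le> (\<Sum>i<n. \<bar>(F (Suc i) - F i)/\<eta> - (1/n) * g (1*t + i*h)\<bar>)"
      by (rule sum_abs)
    also have "\<dots> \<le> (\<Sum>i<n. \<epsilon>/n)" by (rule sum_mono) (use step in auto)
    also have "\<dots> = \<epsilon>" using npos by simp
    finally show ?thesis .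
  qed
  with V\<psi> show "\<exists>g. V1 \<sigma> g \<and> (\<forall>t. \<bar>t\<bar> \<le> R \<longrightarrow> \<bar>(H (t+\<eta>) - H t)/\<eta> - g t\<bar> \<le> \<epsilon>)" by blast
qed

fun Dk :: "(real \<Rightarrow> real) \<Rightarrow> real \<Rightarrow> nat \<Rightarrow> real \<Rightarrow> real" where
  "Dk \<sigma> \<eta> 0 = \<sigma>"
| "Dk \<sigma> \<eta> (Suc k) = (\<lambda>t. (Dk \<sigma> \<eta> k (t+\<eta>) - Dk \<sigma> \<eta> k t)/\<eta>)"

lemma isCont_shift':
  fixes f :: "real \<Rightarrow> real"
  assumes "\<forall>t. isCont f t"
  shows "isCont (\<lambda>t. f (t + s)) t"
proof (rule isCont_o2[where f="\<lambda>t. t + s"])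
  show "isCont (\<lambda>t. t + s) t" by (intro continuous_intros)
  show "isCont f (t + s)" using assms by blast
qed

lemma chain:
  fixes \<sigma> :: "real \<Rightarrow> real"
  assumes sc: "\<forall>t. isCont \<sigma> t" and sb: "\<forall>t. \<bar>\<sigma> t\<bar> \<le> 1" and eta: "\<eta> > 0"
  shows "\<exists>F. V1 \<sigma> (F 0) \<and> (\<forall>j\<le>k. \<forall>t. isCont (F j) t)
     \<and> (\<forall>j<k. \<forall>t. (F j has_real_derivative F (Suc j) t) (at t))
     \<and> (\<forall>t. F k t = Dk \<sigma> \<eta> k t) \<and> (\<forall>j\<le>k. \<exists>B. \<forall>t. \<bar>F j t\<bar> \<le> B)
     \<and> (\<forall>t. \<exists>\<xi>. t \<le> \<xi> \<and> \<xi> \<le> t + k*\<eta> \<and> F 0 t = \<sigma> \<xi>)"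
proof (induction k)
  case 0
  have "V1 \<sigma> \<sigma>" using V1_sigma[of \<sigma> 1 0] by simp
  then show ?case using sc sb
    by (intro exI[of _ "\<lambda>_. \<sigma>"]) auto
next
  case (Suc k)
  then obtain F where V: "V1 \<sigma> (F 0)" and C: "\<forall>j\<le>k. \<forall>t. isCont (F j) t"
    and D: "\<forall>j<k. \<forall>t. (F j has_real_derivative F (Suc j) t) (at t)"
    and K: "\<forall>t. F k t = Dk \<sigma> \<eta> k t" and B: "\<forall>j\<le>k. \<exists>B. \<forall>t. \<bar>F j t\<bar> \<le> B"
    and X: "\<forall>t. \<exists>\<xi>. t \<le> \<xi> \<and> \<xi> \<le> t + k*\<eta> \<and> F 0 t = \<sigma> \<xi>"
    by blast
  have C0: "continuous_on UNIV (F 0)" using C by (simp add: continuous_on_eq_continuous_at)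
  obtain H where H: "\<forall>t. (H has_real_derivative F 0 t) (at t)"
    using antideriv_exists[OF C0] by blast
  define G where "G j = (if j = 0 then (\<lambda>t. (H (t+\<eta>) - H t)/\<eta>)
                        else (\<lambda>t. (F (j-1) (t+\<eta>) - F (j-1) t)/\<eta>))" for j
  have G0: "G 0 = (\<lambda>t. (H (t+\<eta>) - H t)/\<eta>)" by (simp add: G_def)
  have GS: "G (Suc j) = (\<lambda>t. (F j (t+\<eta>) - F j t)/\<eta>)" for j by (simp add: G_def)
  have VG: "V1 \<sigma> (G 0)" unfolding G0
    by (rule V1_riemann[OF C0 V _ eta]) (use H in blast)
  have DS: "((\<lambda>t. (f (t+\<eta>) - f t)/\<eta>) has_real_derivative (f' (t+\<eta>) - f' t)/\<eta>) (at t)"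
    if "\<forall>t. (f has_real_derivative f' t) (at t)" for f f' t
  proof -
    have 1: "((\<lambda>t. f (t+\<eta>)) has_real_derivative f' (t+\<eta>)) (at t)"
      using that DERIV_shift[of f "f' (t+\<eta>)" t \<eta>] by blast
    have 2: "(f has_real_derivative f' t) (at t)" using that by blast
    show ?thesis using DERIV_cdivide[OF DERIV_diff[OF 1 2], of \<eta>] by simp
  qed
  have DG: "\<forall>j<Suc k. \<forall>t. (G j has_real_derivative G (Suc j) t) (at t)"
  proof (intro allI impI)
    fix j t assume j: "j < Suc k"
    show "(G j has_real_derivative G (Suc j) t) (at t)"
    proof (cases j)
      case 0
      then show ?thesis using DS[of H "F 0" t] H by (simp add: G0 GS)
    next
      case (Suc i)
      then have "i < k" using j by simp
      then show ?thesis using DS[of "F i" "F (Suc i)" t] D \<open>i < k\<close> Suc by (simp add: GS)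
    qed
  qed
  have CG: "\<forall>j\<le>Suc k. \<forall>t. isCont (G j) t"
  proof (intro allI impI)
    fix j t assume j: "j \<le> Suc k"
    show "isCont (G j) t"
    proof (cases j)
      case 0
      have "(G 0 has_real_derivative G 1 t) (at t)" using DG by simp
      then show ?thesis using 0 DERIV_isCont by blast
    next
      case (Suc i)
      then have i: "i \<le> k" using j by simp
      have c1: "isCont (\<lambda>t. F i (t + \<eta>)) t" using isCont_shift' C i by blast
      have c2: "isCont (F i) t" using C i by blast
      have "isCont (\<lambda>t. (F i (t+\<eta>) - F i t)/\<eta>) t"
        using c1 c2 eta by (intro continuous_intros) auto
      then show ?thesis unfolding Suc GS .
    qed
  qed
  have KG: "\<forall>t. G (Suc k) t = Dk \<sigma> \<eta> (Suc k) t" unfolding GS using K by simp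
  have MV: "\<exists>z. t < z \<and> z < t + \<eta> \<and> G 0 t = F 0 z" for t
  proof -
    obtain z where z: "t < z" "z < t + \<eta>" and e: "H (t+\<eta>) - H t = (t + \<eta> - t) * F 0 z"
      using MVT2[of t "t+\<eta>" H "F 0"] H eta by auto
    have "G 0 t = F 0 z" unfolding G0 using e eta by simp
    then show ?thesis using z by blast
  qed
  have BG: "\<forall>j\<le>Suc k. \<exists>B. \<forall>t. \<bar>G j t\<bar> \<le> B"
  proof (intro allI impI)
    fix j assume j: "j \<le> Suc k"
    show "\<exists>B. \<forall>t. \<bar>G j t\<bar> \<le> B"
    proof (cases j)
      case 0
      obtain B0 where B0: "\<forall>t. \<bar>F 0 t\<bar> \<le> B0" using B by blast
      have "\<bar>G 0 t\<bar> \<le> B0" for t using MV[of t] B0 by auto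
      then show ?thesis using 0 by blast
    next
      case (Suc i)
      then have i: "i \<le> k" using j by simp
      obtain Bi where Bi: "\<forall>t. \<bar>F i t\<bar> \<le> Bi" using B i by blast
      have "\<bar>G (Suc i) t\<bar> \<le> 2*Bi/\<eta>" for t
      proof -
        have "\<bar>F i (t+\<eta>) - F i t\<bar> \<le> 2*Bi" using Bi[rule_format, of t] Bi[rule_format, of "t+\<eta>"] by linarith
        then show ?thesis unfolding GS using eta by (simp add: divide_right_mono)
      qed
      then show ?thesis using Suc by blast
    qed
  qed
  have XG: "\<forall>t. \<exists>\<xi>. t \<le> \<xi> \<and> \<xi> \<le> t + Suc k*\<eta> \<and> G 0 t = \<sigma> \<xi>"
  proof
    fix t
    obtain z where z: "t < z" "z < t + \<eta>" "G 0 t = F 0 z" using MV by blast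
    obtain \<xi> where \<xi>: "z \<le> \<xi>" "\<xi> \<le> z + k*\<eta>" "F 0 z = \<sigma> \<xi>" using X by blast
    have "\<xi> \<le> t + Suc k * \<eta>" using z \<xi> by (simp add: algebra_simps)
    moreover have "t \<le> \<xi>" using z \<xi> by linarith
    moreover have "G 0 t = \<sigma> \<xi>" using z \<xi> by simp
    ultimately show "\<exists>\<xi>. t \<le> \<xi> \<and> \<xi> \<le> t + Suc k*\<eta> \<and> G 0 t = \<sigma> \<xi>" by blast
  qed
  show ?case
    by (rule exI[of _ G]) (use VG CG DG KG BG XG in blast)
qed

lemma zero_down:
  fixes f g h :: "real \<Rightarrow> real"
  assumes f': "\<forall>t. (f has_real_derivative g t) (at t)"
    and g': "\<forall>t. (g has_real_derivative h t) (at t)" and h0: "\<forall>t. h t = 0"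
    and fb: "\<forall>t. \<bar>f t\<bar> \<le> B"
  shows "\<forall>t. g t = 0"
proof -
  have "\<forall>x. (g has_real_derivative 0) (at x)" using g' h0 by metis
  then have gc: "g t = g 0" for t using DERIV_isconst_all by blast
  define c where "c = g 0"
  have d: "((\<lambda>t. f t - c*t) has_real_derivative 0) (at x)" for x
  proof -
    have 1: "(f has_real_derivative c) (at x)" using f' gc c_def by metis
    have 2: "((\<lambda>t. c*t) has_real_derivative c) (at x)" using DERIV_cmult[OF DERIV_ident, of c x] by simp
    show ?thesis using DERIV_diff[OF 1 2] by simp
  qed
  have lin: "f t - c*t = f 0" for t using DERIV_isconst_all[of "\<lambda>t. f t - c*t" t 0] d by simp
  have B0: "0 \<le> B" using fb by (meson abs_ge_zero order_trans)
  have "c = 0"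
  proof (rule ccontr)
    assume c: "c \<noteq> 0"
    define t where "t = (2*B+1)/c"
    have "c*t = 2*B+1" using c by (simp add: t_def)
    then have "f t = f 0 + 2*B + 1" using lin[of t] by simp
    moreover have "\<bar>f t\<bar> \<le> B" "\<bar>f 0\<bar> \<le> B" using fb by auto
    ultimately show False using B0 by linarith
  qed
  then show ?thesis using gc c_def by simp
qed

lemma nonvanish:
  fixes \<sigma> :: "real \<Rightarrow> real"
  assumes sc: "\<forall>t. isCont \<sigma> t" and sb: "\<forall>t. \<bar>\<sigma> t\<bar> \<le> 1" and nc: "\<sigma> a \<noteq> \<sigma> b"
  shows "\<exists>\<eta>>0. \<exists>c. Dk \<sigma> \<eta> k c \<noteq> 0"
proof (rule ccontr)
  assume "\<not> ?thesis"
  then have Z: "\<And>\<eta> c. \<eta> > 0 \<Longrightarrow> Dk \<sigma> \<eta> k c = 0" by blast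
  have same: "\<exists>\<xi>1 \<xi>2. t \<le> \<xi>1 \<and> \<xi>1 \<le> t + k*\<eta> \<and> 0 \<le> \<xi>2 \<and> \<xi>2 \<le> 0 + k*\<eta> \<and> \<sigma> \<xi>1 = \<sigma> \<xi>2"
    if eta: "\<eta> > 0" for \<eta> t :: real
  proof -
    obtain F where V: "V1 \<sigma> (F 0)" and C: "\<forall>j\<le>k. \<forall>t. isCont (F j) t"
      and D: "\<forall>j<k. \<forall>t. (F j has_real_derivative F (Suc j) t) (at t)"
      and K: "\<forall>t. F k t = Dk \<sigma> \<eta> k t" and B: "\<forall>j\<le>k. \<exists>B. \<forall>t. \<bar>F j t\<bar> \<le> B"
      and X: "\<forall>t. \<exists>\<xi>. t \<le> \<xi> \<and> \<xi> \<le> t + k*\<eta> \<and> F 0 t = \<sigma> \<xi>"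
      using chain[OF sc sb eta, of k] by blast
    have Fk: "\<forall>t. F k t = 0" using K Z eta by simp
    have F0c: "F 0 s = F 0 0" for s
    proof (cases "k = 0")
      case True then show ?thesis using Fk by simp
    next
      case False
      have down: "m < k \<Longrightarrow> \<forall>t. F (k - m) t = 0" for m
      proof (induction m)
        case 0 then show ?case using Fk by simp
      next
        case (Suc m)
        define j where "j = k - Suc m"
        have j1: "j \<ge> 1" "j < k" using Suc.prems by (auto simp: j_def)
        have kj: "k - m = Suc j" using Suc.prems by (simp add: j_def)
        have h0: "\<forall>t. F (Suc j) t = 0" using Suc.IH Suc.prems kj by simp
        obtain Bj where Bj: "\<forall>t. \<bar>F (j - 1) t\<bar> \<le> Bj" using B j1 by (meson diff_le_self less_imp_le order_trans)
        have d1: "\<forall>t. (F (j-1) has_real_derivative F j t) (at t)"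
          using D j1 by (metis One_nat_def Suc_pred less_imp_diff_less zero_less_one order_less_le_trans)
        have d2: "\<forall>t. (F j has_real_derivative F (Suc j) t) (at t)" using D j1 by blast
        have "\<forall>t. F j t = 0" by (rule zero_down[OF d1 d2 h0 Bj])
        then show ?case by (simp add: j_def)
      qed
      have "\<forall>t. F 1 t = 0" using down[of "k - 1"] False by simp
      then have "\<forall>x. (F 0 has_real_derivative 0) (at x)" using D False by (metis One_nat_def neq0_conv)
      then show ?thesis using DERIV_isconst_all by blast
    qed
    obtain \<xi>1 where 1: "t \<le> \<xi>1" "\<xi>1 \<le> t + k*\<eta>" "F 0 t = \<sigma> \<xi>1" using X by blast
    obtain \<xi>2 where 2: "0 \<le> \<xi>2" "\<xi>2 \<le> 0 + k*\<eta>" "F 0 0 = \<sigma> \<xi>2" using X by blast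
    show ?thesis using 1 2 F0c[of t] by metis
  qed
  have allc: "\<sigma> t = \<sigma> 0" for t
  proof (rule ccontr)
    assume ne: "\<sigma> t \<noteq> \<sigma> 0"
    define e where "e = \<bar>\<sigma> t - \<sigma> 0\<bar>/2"
    have e: "e > 0" using ne by (simp add: e_def)
    obtain d1 where d1: "d1 > 0" "\<forall>x'. dist x' t < d1 \<longrightarrow> dist (\<sigma> x') (\<sigma> t) < e"
      using sc e unfolding continuous_at_eps_delta by blast
    obtain d2 where d2: "d2 > 0" "\<forall>x'. dist x' 0 < d2 \<longrightarrow> dist (\<sigma> x') (\<sigma> 0) < e"
      using sc e unfolding continuous_at_eps_delta by blast
    define \<eta> where "\<eta> = min d1 d2 / (k+1)"
    have eta: "\<eta> > 0" using d1 d2 by (simp add: \<eta>_def)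
    have keta: "k*\<eta> < min d1 d2"
    proof -
      have "k*\<eta> = (k/(k+1)) * min d1 d2" by (simp add: \<eta>_def)
      also have "\<dots> < 1 * min d1 d2" using d1 d2 by (intro mult_strict_right_mono) auto
      finally show ?thesis by simp
    qed
    obtain \<xi>1 \<xi>2 where x: "t \<le> \<xi>1" "\<xi>1 \<le> t + k*\<eta>" "0 \<le> \<xi>2" "\<xi>2 \<le> 0 + k*\<eta>" "\<sigma> \<xi>1 = \<sigma> \<xi>2"
      using same[OF eta, of t] by blast
    have "dist \<xi>1 t < d1" using x keta by (simp add: dist_real_def)
    then have a1: "\<bar>\<sigma> \<xi>1 - \<sigma> t\<bar> < e" using d1 by (simp add: dist_real_def)
    have "dist \<xi>2 0 < d2" using x keta by (simp add: dist_real_def)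
    then have a2: "\<bar>\<sigma> \<xi>2 - \<sigma> 0\<bar> < e" using d2 by (simp add: dist_real_def)
    have "\<sigma> t - \<sigma> 0 = (\<sigma> \<xi>2 - \<sigma> 0) - (\<sigma> \<xi>1 - \<sigma> t)" using x(5) by simp
    then have "\<bar>\<sigma> t - \<sigma> 0\<bar> \<le> \<bar>\<sigma> \<xi>2 - \<sigma> 0\<bar> + \<bar>\<sigma> \<xi>1 - \<sigma> t\<bar>" by (metis abs_triangle_ineq4)
    then have "\<bar>\<sigma> t - \<sigma> 0\<bar> < e + e" using a1 a2 by linarith
    then show False using e_def by simp
  qed
  then show False using nc by metis
qed

lemma sum_zero_pow:
  fixes a :: "nat \<Rightarrow> real"
  assumes "m > 0"
  shows "(\<Sum>j<m. a j * 0^j) = a 0"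
proof -
  have "(\<Sum>j<m. a j * 0^j) = (\<Sum>j<m. if j = 0 then a j else 0)"
    by (rule sum.cong) auto
  also have "\<dots> = a 0" using assms by (simp add: sum.delta)
  finally show ?thesis .
qed

lemma monomials:
  fixes \<sigma> :: "real \<Rightarrow> real"
  assumes sc: "\<forall>t. isCont \<sigma> t" and sb: "\<forall>t. \<bar>\<sigma> t\<bar> \<le> 1" and nc: "\<sigma> a \<noteq> \<sigma> b"
  shows "V1 \<sigma> (\<lambda>t. t^m)"
proof (induction m rule: less_induct)
  case (less m)
  show ?case
  proof (cases "m = 0")
    case True then show ?thesis using V1_const[of \<sigma> 1] by simp
  next
    case False
    then have m0: "m > 0" by simp
    obtain \<eta> c where eta: "\<eta> > 0" and Dn: "Dk \<sigma> \<eta> m c \<noteq> 0"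
      using nonvanish[OF sc sb nc, of m] by blast
    obtain F where V: "V1 \<sigma> (F 0)" and C: "\<forall>j\<le>m. \<forall>t. isCont (F j) t"
      and D: "\<forall>j<m. \<forall>t. (F j has_real_derivative F (Suc j) t) (at t)"
      and K: "\<forall>t. F m t = Dk \<sigma> \<eta> m t"
      using chain[OF sc sb eta, of m] by blast
    define A where "A = F m c"
    have A: "A \<noteq> 0" using Dn K by (simp add: A_def)
    show ?thesis
    proof (rule V1_limit)
      fix R \<epsilon> :: real assume R: "R > 0" and e: "\<epsilon> > 0"
      define e' where "e' = \<epsilon> * \<bar>A\<bar> / (R^m + 1)"
      have Rm: "R^m + 1 > 0" using R by (simp add: add_nonneg_pos)
      have e': "e' > 0" using e A Rm by (simp add: e'_def)
      obtain \<delta> where d: "\<delta> > 0" and dd: "\<forall>x'. dist x' c < \<delta> \<longrightarrow> dist (F m x') (F m c) < e'"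
        using C e' unfolding continuous_at_eps_delta by blast
      define l where "l = \<delta> / (2*R)"
      have l: "l > 0" using d R by (simp add: l_def)
      define K where "K = fact m / (A * l^m)"
      define \<phi> where "\<phi> t = K * (F 0 (l*t + c) - (\<Sum>j<m. (F j c / fact j * l^j) * t^j))" for t
      have V\<phi>: "V1 \<sigma> \<phi>"
        unfolding \<phi>_def
        by (intro V1_scale V1_diff V1_affine V V1_sum less.IH) simp
      have bound: "\<bar>t^m - \<phi> t\<bar> \<le> \<epsilon>" if t: "\<bar>t\<bar> \<le> R" for t
      proof (cases "t = 0")
        case True
        have "\<phi> 0 = 0" unfolding \<phi>_def using sum_zero_pow[OF m0, of "\<lambda>j. F j c / fact j * l^j"]
          by simp
        then show ?thesis using True m0 e by (simp add: power_0_left)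
      next
        case False
        define x where "x = c + l*t"
        have xc: "x \<noteq> c" using False l by (simp add: x_def)
        have lt: "\<bar>l*t\<bar> \<le> \<delta>/2"
        proof -
          have "\<bar>l*t\<bar> = l * \<bar>t\<bar>" using l by (simp add: abs_mult)
          also have "\<dots> \<le> l * R" using t l by (simp add: mult_left_mono)
          also have "\<dots> = \<delta>/2" using R by (simp add: l_def)
          finally show ?thesis .
        qed
        have x1: "c - \<delta> \<le> x" "x \<le> c + \<delta>" using lt d unfolding x_def by (simp_all add: abs_le_iff) 
        have DD: "\<forall>j t. j < m \<and> c - \<delta> \<le> t \<and> t \<le> c + \<delta> \<longrightarrow> (F j has_real_derivative F (Suc j) t) (at t)"
          using D by blast
        obtain \<xi> where \<xi>: "(if x < c then x < \<xi> \<and> \<xi> < c else c < \<xi> \<and> \<xi> < x)"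
          and tay: "F 0 x = (\<Sum>j<m. (F j c / fact j) * (x - c)^j) + (F m \<xi> / fact m) * (x - c)^m"
          using Taylor[of m F "F 0" "c - \<delta>" "c + \<delta>" c x] m0 DD d x1 xc by auto
        have xi: "\<bar>\<xi> - c\<bar> < \<delta>"
        proof -
          have "\<bar>\<xi> - c\<bar> \<le> \<bar>x - c\<bar>" using \<xi> by (auto split: if_splits)
          also have "\<dots> = \<bar>l*t\<bar>" by (simp add: x_def)
          finally show ?thesis using lt d by linarith
        qed
        have Fxi: "\<bar>F m \<xi> - A\<bar> < e'" using dd xi by (simp add: dist_real_def A_def)
        have sumeq: "(\<Sum>j<m. (F j c / fact j) * (x - c)^j) = (\<Sum>j<m. (F j c / fact j * l^j) * t^j)"
          by (rule sum.cong) (simp_all add: x_def power_mult_distrib)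
        have "F 0 (l*t + c) - (\<Sum>j<m. (F j c / fact j * l^j) * t^j) = (F m \<xi> / fact m) * l^m * t^m"
          using tay sumeq by (simp add: x_def add.commute power_mult_distrib)
        then have phit: "\<phi> t = F m \<xi> / A * t^m"
          unfolding \<phi>_def K_def using A l by (simp add: field_simps)
        have "t^m - \<phi> t = t^m * (A - F m \<xi>) / A" unfolding phit using A by (simp add: field_simps)
        then have "\<bar>t^m - \<phi> t\<bar> = \<bar>t\<bar>^m * \<bar>F m \<xi> - A\<bar> / \<bar>A\<bar>"
          by (simp add: abs_mult power_abs abs_minus_commute)
        also have "\<dots> \<le> R^m * e' / \<bar>A\<bar>"
        proof -
          have "\<bar>t\<bar>^m \<le> R^m" using t by (simp add: power_mono)
          then have "\<bar>t\<bar>^m * \<bar>F m \<xi> - A\<bar> \<le> R^m * e'"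
            using Fxi R by (intro mult_mono) auto
          then show ?thesis using A by (simp add: divide_right_mono)
        qed
        also have "\<dots> = \<epsilon> * (R^m / (R^m + 1))"
        proof -
          have Ap: "\<bar>A\<bar> \<noteq> 0" using A by simp
          have "R^m * e' / \<bar>A\<bar> = (R^m * \<epsilon> / (R^m + 1)) * (\<bar>A\<bar> / \<bar>A\<bar>)"
            unfolding e'_def by (simp add: mult_ac)
          also have "\<dots> = R^m * \<epsilon> / (R^m + 1)" using Ap by simp
          finally show ?thesis by simp
        qed
        also have "\<dots> \<le> \<epsilon> * 1" using e Rm by (intro mult_left_mono) auto
        finally show ?thesis by simp
      qed
      show "\<exists>g. V1 \<sigma> g \<and> (\<forall>t. \<bar>t\<bar> \<le> R \<longrightarrow> \<bar>t^m - g t\<bar> \<le> \<epsilon>)"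
        using V\<phi> bound by blast
    qed
  qed
qed

definition lf :: "nat \<Rightarrow> (nat \<Rightarrow> real) \<Rightarrow> (nat \<Rightarrow> real) \<Rightarrow> real" where
  "lf d v x = (\<Sum>j=1..d. v j * x j)"

definition netd :: "(real \<Rightarrow> real) \<Rightarrow> nat \<Rightarrow> (real \<times> (nat \<Rightarrow> real) \<times> real) list \<Rightarrow> (nat \<Rightarrow> real) \<Rightarrow> real" where
  "netd \<sigma> d xs x = sum_list (map (\<lambda>(a,v,b). a * \<sigma> (lf d v x + b)) xs)"

definition KK :: "(real \<Rightarrow> real) \<Rightarrow> nat \<Rightarrow> ((nat \<Rightarrow> real) \<Rightarrow> real) \<Rightarrow> bool" where
  "KK \<sigma> d g \<longleftrightarrow> (\<forall>\<epsilon>>0. \<exists>c xs. \<forall>x\<in>unit_cube d. \<bar>g x - (c + netd \<sigma> d xs x)\<bar> \<le> \<epsilon>)"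

lemma netd_append: "netd \<sigma> d (xs@ys) x = netd \<sigma> d xs x + netd \<sigma> d ys x"
  by (simp add: netd_def)

lemma netd_scale: "netd \<sigma> d (map (\<lambda>(a,v,b). (k*a,v,b)) xs) x = k * netd \<sigma> d xs x"
  by (induction xs) (auto simp: netd_def algebra_simps)

lemma lf_scale: "lf d (\<lambda>j. w * v j) x = w * lf d v x"
  by (simp add: lf_def sum_distrib_left mult.assoc)

lemma lf_add: "lf d (\<lambda>j. v j + s * w j) x = lf d v x + s * lf d w x"
  by (simp add: lf_def sum.distrib sum_distrib_left algebra_simps)

lemma lf_zero: "lf d (\<lambda>j. 0) x = 0"
  by (simp add: lf_def)

lemma lf_coord: "i \<in> {1..d} \<Longrightarrow> lf d (\<lambda>j. if j = i then 1 else 0) x = x i"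
  by (simp add: lf_def if_distrib[of "\<lambda>c. c * x _"] cong: if_cong)

lemma netd_ridge: "netd \<sigma> d (map (\<lambda>(a,w,b). (a, \<lambda>j. w * v j, b)) xs) x = net1 \<sigma> xs (lf d v x)"
  by (induction xs) (auto simp: netd_def net1_def lf_scale)

lemma lf_bound:
  assumes "x \<in> unit_cube d"
  shows "\<bar>lf d v x\<bar> \<le> (\<Sum>j=1..d. \<bar>v j\<bar>)"
proof -
  have "\<bar>lf d v x\<bar> \<le> (\<Sum>j=1..d. \<bar>v j * x j\<bar>)" unfolding lf_def by (rule sum_abs)
  also have "\<dots> \<le> (\<Sum>j=1..d. \<bar>v j\<bar>)"
  proof (rule sum_mono)
    fix j assume "j \<in> {1..d}"
    then have "\<bar>x j\<bar> \<le> 1" using assms by (auto simp: unit_cube_def)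
    then show "\<bar>v j * x j\<bar> \<le> \<bar>v j\<bar>" by (simp add: abs_mult mult_left_le)
  qed
  finally show ?thesis .
qed

lemma KK_add:
  assumes "KK \<sigma> d f" "KK \<sigma> d g"
  shows "KK \<sigma> d (\<lambda>x. f x + g x)"
  unfolding KK_def
proof (intro allI impI)
  fix \<epsilon> :: real assume e: "\<epsilon> > 0"
  obtain c1 xs1 where 1: "\<forall>x\<in>unit_cube d. \<bar>f x - (c1 + netd \<sigma> d xs1 x)\<bar> \<le> \<epsilon>/2"
    using assms(1) e unfolding KK_def by (meson half_gt_zero)
  obtain c2 xs2 where 2: "\<forall>x\<in>unit_cube d. \<bar>g x - (c2 + netd \<sigma> d xs2 x)\<bar> \<le> \<epsilon>/2"
    using assms(2) e unfolding KK_def by (meson half_gt_zero)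
  show "\<exists>c xs. \<forall>x\<in>unit_cube d. \<bar>f x + g x - (c + netd \<sigma> d xs x)\<bar> \<le> \<epsilon>"
  proof (intro exI[of _ "c1+c2"] exI[of _ "xs1@xs2"] ballI)
    fix x assume "x \<in> unit_cube d"
    with 1 2 have "\<bar>f x - (c1 + netd \<sigma> d xs1 x)\<bar> \<le> \<epsilon>/2" "\<bar>g x - (c2 + netd \<sigma> d xs2 x)\<bar> \<le> \<epsilon>/2" by auto
    then show "\<bar>f x + g x - (c1 + c2 + netd \<sigma> d (xs1@xs2) x)\<bar> \<le> \<epsilon>"
      by (unfold netd_append) arith
  qed
qed

lemma KK_scale:
  assumes "KK \<sigma> d f"
  shows "KK \<sigma> d (\<lambda>x. k * f x)"
  unfolding KK_def
proof (intro allI impI)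
  fix \<epsilon> :: real assume e: "\<epsilon> > 0"
  have e': "\<epsilon> / (\<bar>k\<bar>+1) > 0" using e by simp
  obtain c1 xs1 where 1: "\<forall>x\<in>unit_cube d. \<bar>f x - (c1 + netd \<sigma> d xs1 x)\<bar> \<le> \<epsilon>/(\<bar>k\<bar>+1)"
    using assms(1) e' unfolding KK_def by meson
  show "\<exists>c xs. \<forall>x\<in>unit_cube d. \<bar>k * f x - (c + netd \<sigma> d xs x)\<bar> \<le> \<epsilon>"
  proof (intro exI[of _ "k*c1"] exI[of _ "map (\<lambda>(a,v,b). (k*a,v,b)) xs1"] ballI)
    fix x assume "x \<in> unit_cube d"
    with 1 have h: "\<bar>f x - (c1 + netd \<sigma> d xs1 x)\<bar> \<le> \<epsilon>/(\<bar>k\<bar>+1)" by auto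
    have "\<bar>k * f x - (k*c1 + netd \<sigma> d (map (\<lambda>(a,v,b). (k*a,v,b)) xs1) x)\<bar>
        = \<bar>k\<bar> * \<bar>f x - (c1 + netd \<sigma> d xs1 x)\<bar>"
      by (simp only: netd_scale) (simp add: abs_mult[symmetric] algebra_simps)
    also have "\<dots> \<le> \<bar>k\<bar> * (\<epsilon>/(\<bar>k\<bar>+1))" by (rule mult_left_mono[OF h]) simp
    also have "\<dots> \<le> \<epsilon>" using e by (simp add: field_simps)
    finally show "\<bar>k * f x - (k*c1 + netd \<sigma> d (map (\<lambda>(a,v,b). (k*a,v,b)) xs1) x)\<bar> \<le> \<epsilon>" .
  qed
qed

lemma KK_limit:
  assumes "\<And>\<epsilon>. \<epsilon> > 0 \<Longrightarrow> \<exists>g. KK \<sigma> d g \<and> (\<forall>x\<in>unit_cube d. \<bar>f x - g x\<bar> \<le> \<epsilon>)"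
  shows "KK \<sigma> d f"
  unfolding KK_def
proof (intro allI impI)
  fix \<epsilon> :: real assume e: "\<epsilon> > 0"
  obtain g where g: "KK \<sigma> d g" "\<forall>x\<in>unit_cube d. \<bar>f x - g x\<bar> \<le> \<epsilon>/2"
    using assms[of "\<epsilon>/2"] e by auto
  obtain c1 xs1 where 1: "\<forall>x\<in>unit_cube d. \<bar>g x - (c1 + netd \<sigma> d xs1 x)\<bar> \<le> \<epsilon>/2"
    using g(1) e unfolding KK_def by (meson half_gt_zero)
  show "\<exists>c xs. \<forall>x\<in>unit_cube d. \<bar>f x - (c + netd \<sigma> d xs x)\<bar> \<le> \<epsilon>"
  proof (intro exI[of _ c1] exI[of _ xs1] ballI)
    fix x assume "x \<in> unit_cube d"
    with 1 g(2) have "\<bar>g x - (c1 + netd \<sigma> d xs1 x)\<bar> \<le> \<epsilon>/2" "\<bar>f x - g x\<bar> \<le> \<epsilon>/2" by auto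
    then show "\<bar>f x - (c1 + netd \<sigma> d xs1 x)\<bar> \<le> \<epsilon>" by linarith
  qed
qed

lemma KK_ridge:
  assumes "V1 \<sigma> \<phi>"
  shows "KK \<sigma> d (\<lambda>x. \<phi> (lf d v x))"
  unfolding KK_def
proof (intro allI impI)
  fix \<epsilon> :: real assume e: "\<epsilon> > 0"
  define R where "R = (\<Sum>j=1..d. \<bar>v j\<bar>) + 1"
  have R: "R > 0" unfolding R_def by (simp add: add_nonneg_pos sum_nonneg)
  obtain c xs where cx: "\<forall>t. \<bar>t\<bar> \<le> R \<longrightarrow> \<bar>\<phi> t - (c + net1 \<sigma> xs t)\<bar> \<le> \<epsilon>"
    using assms R e unfolding V1_def by blast
  show "\<exists>c xs. \<forall>x\<in>unit_cube d. \<bar>\<phi> (lf d v x) - (c + netd \<sigma> d xs x)\<bar> \<le> \<epsilon>"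
  proof (intro exI[of _ c] exI[of _ "map (\<lambda>(a,w,b). (a, \<lambda>j. w * v j, b)) xs"] ballI)
    fix x assume x: "x \<in> unit_cube d"
    have "\<bar>lf d v x\<bar> \<le> R" using lf_bound[OF x, of v] by (simp add: R_def)
    then show "\<bar>\<phi> (lf d v x) - (c + netd \<sigma> d (map (\<lambda>(a,w,b). (a, \<lambda>j. w * v j, b)) xs) x)\<bar> \<le> \<epsilon>"
      using cx by (simp add: netd_ridge)
  qed
qed

lemma binom_err:
  fixes B :: real
  assumes B: "B \<ge> 0"
  shows "\<exists>C. \<forall>a b s. \<bar>a\<bar> \<le> B \<longrightarrow> \<bar>b\<bar> \<le> B \<longrightarrow> \<bar>s\<bar> \<le> 1 \<longrightarrow>
     abs ((a+s*b)^(Suc n) - a^(Suc n) - real (Suc n) * s * a^n*b) \<le> C * s^2"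
proof (induction n)
  case 0
  show ?case by (rule exI[of _ 0]) simp
next
  case (Suc n)
  then obtain C where C: "\<forall>a b s. \<bar>a\<bar> \<le> B \<longrightarrow> \<bar>b\<bar> \<le> B \<longrightarrow> \<bar>s\<bar> \<le> 1 \<longrightarrow>
     abs ((a+s*b)^(Suc n) - a^(Suc n) - real (Suc n) * s * a^n*b) \<le> C * s^2" by blast
  have C0: "C \<ge> 0" using C[rule_format, of 0 0 1] B by simp
  show ?case
  proof (rule exI[of _ "2*B*C + real (Suc n)*B^(n+2)"], intro allI impI)
    fix a b s :: real assume a: "\<bar>a\<bar> \<le> B" and b: "\<bar>b\<bar> \<le> B" and s: "\<bar>s\<bar> \<le> 1"
    define E where "E = (a+s*b)^(Suc n) - a^(Suc n) - real (Suc n) * s * a^n*b"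
    have E: "\<bar>E\<bar> \<le> C * s^2" using C a b s by (simp add: E_def)
    have id: "(a+s*b)^(Suc (Suc n)) - a^(Suc (Suc n)) - real (Suc (Suc n)) * s * a^(Suc n)*b
          = (a+s*b)*E + real (Suc n) * s^2*(a^n*b^2)"
      by (simp add: E_def algebra_simps power2_eq_square)
    have ab: "\<bar>a+s*b\<bar> \<le> 2*B"
    proof -
      have "\<bar>s\<bar> * \<bar>b\<bar> \<le> 1 * B" by (rule mult_mono[OF s b]) auto
      then have "\<bar>s * b\<bar> \<le> B" by (simp add: abs_mult)
      then show ?thesis using a by (metis abs_triangle_ineq add_mono mult_2 order_trans)
    qed
    have t1: "\<bar>(a+s*b)*E\<bar> \<le> 2*B*(C * s^2)" unfolding abs_mult by (rule mult_mono[OF ab E]) (use B in auto)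
    have an: "\<bar>a^n*b^2\<bar> \<le> B^(n+2)"
    proof -
      have "\<bar>a^n*b^2\<bar> = \<bar>a\<bar>^n * \<bar>b\<bar>^2" by (simp add: abs_mult power_abs)
      also have "\<dots> \<le> B^n * B^2" using a b by (intro mult_mono power_mono) auto
      finally show ?thesis by (simp add: power_add power2_eq_square mult_ac)
    qed
    have t2: "\<bar>real (Suc n) * s^2*(a^n*b^2)\<bar> \<le> real (Suc n) * s^2*B^(n+2)"
    proof -
      have "\<bar>real (Suc n) * s^2*(a^n*b^2)\<bar> = (real (Suc n) * s^2) * \<bar>a^n*b^2\<bar>"
        by (simp add: abs_mult)
      also have "\<dots> \<le> (real (Suc n) * s^2) * B^(n+2)" by (rule mult_left_mono[OF an]) simp
      finally show ?thesis .
    qed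
    have "\<bar>(a+s*b)*E + real (Suc n) * s^2*(a^n*b^2)\<bar> \<le> 2*B*(C * s^2) + real (Suc n) * s^2*B^(n+2)"
      using t1 t2 abs_triangle_ineq[of "(a+s*b)*E" "real (Suc n) * s^2*(a^n*b^2)"] by linarith
    then show "abs ((a+s*b)^(Suc (Suc n)) - a^(Suc (Suc n)) - real (Suc (Suc n)) * s * a^(Suc n)*b) \<le> (2*B*C + real (Suc n)*B^(n+2)) * s^2"
      unfolding id by (simp add: algebra_simps)
  qed
qed

lemma prod_bound:
  "\<exists>P\<ge>0. \<forall>x\<in>unit_cube d. \<bar>prod_list (map (\<lambda>w. lf d w x) ws)\<bar> \<le> P"
proof (induction ws)
  case Nil then show ?case by (intro exI[of _ 1]) simp
next
  case (Cons w ws)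
  then obtain P where P: "P \<ge> 0" "\<forall>x\<in>unit_cube d. \<bar>prod_list (map (\<lambda>w. lf d w x) ws)\<bar> \<le> P" by blast
  define W where "W = (\<Sum>j=1..d. \<bar>w j\<bar>)"
  have W: "W \<ge> 0" unfolding W_def by (simp add: sum_nonneg)
  show ?case
  proof (intro exI[of _ "W*P"] conjI ballI)
    show "0 \<le> W*P" using W P by simp
    fix x assume x: "x \<in> unit_cube d"
    have "\<bar>prod_list (map (\<lambda>w. lf d w x) (w # ws))\<bar> = \<bar>lf d w x\<bar> * \<bar>prod_list (map (\<lambda>w. lf d w x) ws)\<bar>"
      by (simp add: abs_mult)
    also have "\<dots> \<le> W * P" using lf_bound[OF x, of w] P x W unfolding W_def by (intro mult_mono) auto
    finally show "\<bar>prod_list (map (\<lambda>w. lf d w x) (w # ws))\<bar> \<le> W*P" .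
  qed
qed

lemma KK_prod:
  fixes \<sigma> :: "real \<Rightarrow> real"
  assumes sc: "\<forall>t. isCont \<sigma> t" and sb: "\<forall>t. \<bar>\<sigma> t\<bar> \<le> 1" and nc: "\<sigma> a0 \<noteq> \<sigma> b0"
  shows "KK \<sigma> d (\<lambda>x. lf d v x ^ m * prod_list (map (\<lambda>w. lf d w x) ws))"
proof (induction ws arbitrary: v m)
  case Nil
  show ?case using KK_ridge[OF monomials[OF sc sb nc, of m], of d v] by simp
next
  case (Cons w ws)
  define PP where "PP x = prod_list (map (\<lambda>w. lf d w x) ws)" for x
  show ?case
  proof (rule KK_limit)
    fix \<epsilon> :: real assume e: "\<epsilon> > 0"
    obtain P where P: "P \<ge> 0" "\<forall>x\<in>unit_cube d. \<bar>PP x\<bar> \<le> P" using prod_bound[of d ws] unfolding PP_def by blast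
    define Bv where "Bv = (\<Sum>j=1..d. \<bar>v j\<bar>) + (\<Sum>j=1..d. \<bar>w j\<bar>)"
    have Bv: "Bv \<ge> 0" unfolding Bv_def by (simp add: sum_nonneg add_nonneg_nonneg)
    obtain C where C: "\<forall>a b s. \<bar>a\<bar> \<le> Bv \<longrightarrow> \<bar>b\<bar> \<le> Bv \<longrightarrow> \<bar>s\<bar> \<le> 1 \<longrightarrow>
       abs ((a+s*b)^(Suc m) - a^(Suc m) - real (Suc m) * s * a^m*b) \<le> C * s^2"
      using binom_err[OF Bv, of m] by blast
    have C0: "C \<ge> 0" using C[rule_format, of 0 0 1] Bv by simp
    define s where "s = min 1 (\<epsilon> / ((C+1)*(P+1)))"
    have s0: "s > 0" using e C0 P by (simp add: s_def)
    have s1: "s \<le> 1" by (simp add: s_def)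
    have sCP: "C * s * P \<le> \<epsilon>"
    proof -
      have "C * s * P \<le> (C+1) * s * (P+1)" using C0 P s0 by (intro mult_mono) auto
      also have "\<dots> = ((C+1)*(P+1)) * s" by simp
      also have "\<dots> \<le> ((C+1)*(P+1)) * (\<epsilon> / ((C+1)*(P+1)))" using C0 P
        by (intro mult_left_mono) (auto simp: s_def)
      also have "\<dots> = \<epsilon>" using C0 P by simp
      finally show ?thesis .
    qed
    define g where "g x = (1/(real (Suc m) * s)) * (lf d (\<lambda>j. v j + s * w j) x ^ (Suc m) * PP x + (-1) * (lf d v x ^ (Suc m) * PP x))" for x
    have Kg: "KK \<sigma> d g"
      unfolding g_def PP_def by (intro KK_scale KK_add Cons.IH)
    have "\<bar>lf d v x ^ m * prod_list (map (\<lambda>w. lf d w x) (w # ws)) - g x\<bar> \<le> \<epsilon>" if x: "x \<in> unit_cube d" for x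
    proof -
      define a where "a = lf d v x"
      define b where "b = lf d w x"
      have ab: "\<bar>a\<bar> \<le> Bv" "\<bar>b\<bar> \<le> Bv"
        using lf_bound[OF x, of v] lf_bound[OF x, of w] sum_nonneg[of "{1..d}" "\<lambda>j. \<bar>v j\<bar>"] sum_nonneg[of "{1..d}" "\<lambda>j. \<bar>w j\<bar>"]
        unfolding a_def b_def Bv_def by auto
      define E where "E = (a+s*b)^(Suc m) - a^(Suc m) - real (Suc m) * s * a^m*b"
      have E: "\<bar>E\<bar> \<le> C * s^2" using C ab s0 s1 unfolding E_def by simp
      have gx: "g x = ((a+s*b)^(Suc m) - a^(Suc m)) * PP x / (real (Suc m) * s)"
        unfolding g_def a_def b_def lf_add by (simp add: left_diff_distrib)
      have "lf d v x ^ m * prod_list (map (\<lambda>w. lf d w x) (w # ws)) - g x = - (E * PP x / (real (Suc m) * s))"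
      proof -
        have M': "s + s * real m > 0" using s0 by (simp add: add_pos_nonneg)
        show ?thesis unfolding gx E_def using s0 M' by (simp add: a_def b_def PP_def field_simps)
      qed
      then have "\<bar>lf d v x ^ m * prod_list (map (\<lambda>w. lf d w x) (w # ws)) - g x\<bar> = \<bar>E\<bar> * \<bar>PP x\<bar> / (real (Suc m) * s)"
        using s0 by (simp add: abs_mult)
      also have "\<dots> \<le> (C * s^2) * P / (real (Suc m) * s)"
        using E P x s0 by (intro divide_right_mono mult_mono) auto
      also have "\<dots> = C * s * P / real (Suc m)" using s0 by (simp add: power2_eq_square)
      also have "\<dots> \<le> C * s * P" using mult_nonneg_nonneg[OF mult_nonneg_nonneg[OF C0 less_imp_le[OF s0]] P(1)] by (simp add: divide_le_eq mult_le_cancel_left1 mult_le_cancel_left2 mult_le_cancel_right1)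
      also have "\<dots> \<le> \<epsilon>" by (rule sCP)
      finally show ?thesis .
    qed
    then show "\<exists>g. KK \<sigma> d g \<and> (\<forall>x\<in>unit_cube d. \<bar>lf d v x ^ m * prod_list (map (\<lambda>w. lf d w x) (w # ws)) - g x\<bar> \<le> \<epsilon>)"
      using Kg by blast
  qed
qed

inductive_set prods :: "nat \<Rightarrow> ((nat \<Rightarrow> real) \<Rightarrow> real) set" for d where
  pconst: "(\<lambda>x. c) \<in> prods d"
| pcoord: "i \<in> {1..d} \<Longrightarrow> \<pi> \<in> prods d \<Longrightarrow> (\<lambda>x. x i * \<pi> x) \<in> prods d"

inductive_set spanp :: "nat \<Rightarrow> ((nat \<Rightarrow> real) \<Rightarrow> real) set" for d where
  sprod: "\<pi> \<in> prods d \<Longrightarrow> \<pi> \<in> spanp d"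
| sadd: "f \<in> spanp d \<Longrightarrow> g \<in> spanp d \<Longrightarrow> (\<lambda>x. f x + g x) \<in> spanp d"

lemma prods_scale: "\<pi> \<in> prods d \<Longrightarrow> (\<lambda>x. k * \<pi> x) \<in> prods d"
proof (induction rule: prods.induct)
  case (pconst c) then show ?case using prods.pconst[of "k*c" d] by simp
next
  case (pcoord i \<pi>)
  have "(\<lambda>x. x i * (k * \<pi> x)) \<in> prods d" using pcoord by (intro prods.pcoord)
  then show ?case by (simp add: mult.left_commute)
qed

lemma prods_mult: "\<pi>1 \<in> prods d \<Longrightarrow> \<pi>2 \<in> prods d \<Longrightarrow> (\<lambda>x. \<pi>1 x * \<pi>2 x) \<in> prods d"
proof (induction rule: prods.induct)
  case (pconst c) then show ?case using prods_scale by blast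
next
  case (pcoord i \<pi>)
  have "(\<lambda>x. x i * (\<pi> x * \<pi>2 x)) \<in> prods d" using pcoord by (intro prods.pcoord) auto
  then show ?case by (simp add: mult.assoc)
qed

lemma spanp_mult_prod: "f \<in> spanp d \<Longrightarrow> \<pi> \<in> prods d \<Longrightarrow> (\<lambda>x. f x * \<pi> x) \<in> spanp d"
proof (induction rule: spanp.induct)
  case (sprod \<pi>') then show ?case using prods_mult by (blast intro: spanp.sprod)
next
  case (sadd f g)
  have "(\<lambda>x. f x * \<pi> x + g x * \<pi> x) \<in> spanp d" using sadd by (intro spanp.sadd) auto
  then show ?case by (simp add: distrib_right)
qed

lemma spanp_mult: "g \<in> spanp d \<Longrightarrow> f \<in> spanp d \<Longrightarrow> (\<lambda>x. f x * g x) \<in> spanp d"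
proof (induction rule: spanp.induct)
  case (sprod \<pi>) then show ?case using spanp_mult_prod by blast
next
  case (sadd g1 g2)
  have "(\<lambda>x. f x * g1 x + f x * g2 x) \<in> spanp d" using sadd by (intro spanp.sadd) auto
  then show ?case by (simp add: distrib_left)
qed

lemma spanp_cont: "f \<in> spanp d \<Longrightarrow> continuous_on (unit_cube d) f"
proof (induction rule: spanp.induct)
  case (sprod \<pi>)
  then show ?case
  proof (induction rule: prods.induct)
    case (pconst c) then show ?case by (rule continuous_on_const)
  next
    case (pcoord i \<pi>)
    have "continuous_on (unit_cube d) (\<lambda>x. x i)"
      by (rule continuous_on_subset[OF continuous_on_product_coordinates]) simp
    then show ?case using pcoord by (intro continuous_on_mult) auto
  qed
next
  case (sadd f g) then show ?case by (intro continuous_on_add) auto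
qed

lemma unit_cube_compact: "compact (unit_cube d)"
proof -
  have "unit_cube d = PiE UNIV (\<lambda>i. if i \<in> {1..d} then {0..1::real} else {0})"
    by (auto simp: unit_cube_def PiE_def Pi_def split: if_splits)
  moreover have "compactin (product_topology (\<lambda>_. euclidean) UNIV) (PiE UNIV (\<lambda>i. if i \<in> {1..d} then {0..1::real} else {0}))"
    by (subst compactin_PiE) auto
  ultimately show ?thesis by (simp add: euclidean_product_topology)
qed

lemma SW_spanp:
  assumes f: "continuous_on (unit_cube d) f" and e: "e > 0"
  shows "\<exists>g. g \<in> spanp d \<and> (\<forall>x\<in>unit_cube d. \<bar>f x - g x\<bar> < e)"
proof (rule Stone_Weierstrass_HOL[of "unit_cube d" "\<lambda>g. g \<in> spanp d", OF unit_cube_compact _ _ _ _ _ f e])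
  show "(\<lambda>x. c) \<in> spanp d" for c by (intro spanp.sprod prods.pconst)
  show "continuous_on (unit_cube d) g" if "g \<in> spanp d" for g using that by (rule spanp_cont)
  show "(\<lambda>x. f x + g x) \<in> spanp d" if "f \<in> spanp d \<and> g \<in> spanp d" for f g using that by (intro spanp.sadd) auto
  show "(\<lambda>x. f x * g x) \<in> spanp d" if "f \<in> spanp d \<and> g \<in> spanp d" for f g using that spanp_mult by blast
  show "\<exists>f. f \<in> spanp d \<and> f x \<noteq> f y" if xy: "x \<in> unit_cube d \<and> y \<in> unit_cube d \<and> x \<noteq> y" for x y
  proof -
    have "\<exists>i. x i \<noteq> y i" using xy by (auto simp: fun_eq_iff)
    then obtain i where i: "x i \<noteq> y i" by blast
    have "i \<in> {1..d}" using xy i by (auto simp: unit_cube_def)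
    then have "(\<lambda>x. x i * 1) \<in> spanp d" by (intro spanp.sprod prods.pcoord prods.pconst)
    then show ?thesis using i by (intro exI[of _ "\<lambda>x. x i * 1"]) simp
  qed
qed

lemma KK_prods:
  fixes \<sigma> :: "real \<Rightarrow> real"
  assumes sc: "\<forall>t. isCont \<sigma> t" and sb: "\<forall>t. \<bar>\<sigma> t\<bar> \<le> 1" and nc: "\<sigma> a0 \<noteq> \<sigma> b0"
  shows "\<pi> \<in> prods d \<Longrightarrow> KK \<sigma> d (\<lambda>x. prod_list (map (\<lambda>w. lf d w x) ws) * \<pi> x)"
proof (induction arbitrary: ws rule: prods.induct)
  case (pconst c)
  have "KK \<sigma> d (\<lambda>x. c * (lf d (\<lambda>j. 0) x ^ 0 * prod_list (map (\<lambda>w. lf d w x) ws)))"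
    by (intro KK_scale KK_prod[OF sc sb nc])
  then show ?case by (simp add: mult.commute)
next
  case (pcoord i \<pi>)
  have "KK \<sigma> d (\<lambda>x. prod_list (map (\<lambda>w. lf d w x) ((\<lambda>j. if j = i then 1 else 0) # ws)) * \<pi> x)"
    by (rule pcoord.IH)
  then show ?case using lf_coord[OF pcoord.hyps(1)] by (simp add: mult_ac)
qed

lemma KK_spanp:
  fixes \<sigma> :: "real \<Rightarrow> real"
  assumes sc: "\<forall>t. isCont \<sigma> t" and sb: "\<forall>t. \<bar>\<sigma> t\<bar> \<le> 1" and nc: "\<sigma> a0 \<noteq> \<sigma> b0"
  shows "f \<in> spanp d \<Longrightarrow> KK \<sigma> d f"
proof (induction rule: spanp.induct)
  case (sprod \<pi>) then show ?case using KK_prods[OF sc sb nc sprod, of "[]"] by simp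
next
  case (sadd f g) then show ?case using KK_add[of \<sigma> d f g] by blast
qed

lemma KK_all:
  fixes \<sigma> :: "real \<Rightarrow> real"
  assumes sc: "\<forall>t. isCont \<sigma> t" and sb: "\<forall>t. \<bar>\<sigma> t\<bar> \<le> 1" and nc: "\<sigma> a0 \<noteq> \<sigma> b0"
    and f: "continuous_on (unit_cube d) f"
  shows "KK \<sigma> d f"
proof (rule KK_limit)
  fix \<epsilon> :: real assume e: "\<epsilon> > 0"
  obtain g where g: "g \<in> spanp d" "\<forall>x\<in>unit_cube d. \<bar>f x - g x\<bar> < \<epsilon>" using SW_spanp[OF f e] by blast
  show "\<exists>g. KK \<sigma> d g \<and> (\<forall>x\<in>unit_cube d. \<bar>f x - g x\<bar> \<le> \<epsilon>)"
    using KK_spanp[OF sc sb nc g(1)] g(2) by (intro exI[of _ g]) auto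
qed

definition Wn :: "nat \<Rightarrow> real \<Rightarrow> real \<Rightarrow> (nat \<Rightarrow> real) \<Rightarrow> (nat \<Rightarrow> nat \<Rightarrow> real) \<Rightarrow> nat \<Rightarrow> nat \<Rightarrow> nat \<Rightarrow> real" where
  "Wn d h sd A Vv l k j =
    (if l = 1 then
       (if k \<in> {1..d} then (if j = k then h else 0)
        else if k = d+2 then Vv 0 j else 0)
     else
       (if k \<in> {1..d} then (if j = k then 1/sd else 0)
        else if k = d+1 then (if j = d+1 then 1/sd else if j = d+2 then h * A (l-2) else 0)
        else if k = d+2 then (if j \<in> {1..d} then Vv (l-1) j / (h* sd) else 0)
        else 0))"

definition bn :: "nat \<Rightarrow> real \<Rightarrow> real \<Rightarrow> real \<Rightarrow> real \<Rightarrow> (nat \<Rightarrow> nat \<Rightarrow> real) \<Rightarrow> (nat \<Rightarrow> real) \<Rightarrow> nat \<Rightarrow> nat \<Rightarrow> real" where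
  "bn d h sd t0 a0 Vv Bb l k =
    (if l = 1 then (if k \<in> {1..d} \<or> k = d+1 then t0 else if k = d+2 then Bb 0 else 0)
     else (if k \<in> {1..d} \<or> k = d+1 then t0 - a0/sd
           else if k = d+2 then Bb (l-1) - (a0/(h* sd)) * (\<Sum>j=1..d. Vv (l-1) j) else 0))"

lemma sum_delta_mult:
  fixes y :: "nat \<Rightarrow> real"
  assumes "k \<in> S" "finite S"
  shows "(\<Sum>j\<in>S. (if j = k then c else 0) * y j) = c * y k"
proof -
  have "(\<Sum>j\<in>S. (if j = k then c else 0) * y j) = (\<Sum>j\<in>S. if j = k then c * y j else 0)"
    by (rule sum.cong) auto
  also have "\<dots> = c * y k" using assms by (simp add: sum.delta)
  finally show ?thesis .
qed

definition Dc :: "real \<Rightarrow> real \<Rightarrow> real \<Rightarrow> real \<Rightarrow> real" where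
  "Dc h sd a0 y = (y - a0) / (h * sd)"

context
  fixes \<sigma> :: "real \<Rightarrow> real" and d p :: nat and h sd t0 a0 :: real
    and A Bb :: "nat \<Rightarrow> real" and Vv :: "nat \<Rightarrow> nat \<Rightarrow> real" and x :: "nat \<Rightarrow> real"
  assumes p: "p \<ge> d + 3" and h: "h \<noteq> 0" and sd: "sd \<noteq> 0"
begin

abbreviation "Y l \<equiv> hdann_layer \<sigma> d p (Wn d h sd A Vv) (bn d h sd t0 a0 Vv Bb) l x"

lemma Y_1: "Y 1 k = \<sigma> ((\<Sum>j=1..d. Wn d h sd A Vv 1 k j * x j) + bn d h sd t0 a0 Vv Bb 1 k)"
  by (simp add: One_nat_def)

lemma Y_Suc: "l \<ge> 1 \<Longrightarrow> Y (Suc l) k = \<sigma> ((\<Sum>j=1..p. Wn d h sd A Vv (Suc l) k j * Y l j) + bn d h sd t0 a0 Vv Bb (Suc l) k)"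
  by simp

lemma Y1_x: "k \<in> {1..d} \<Longrightarrow> Y 1 k = \<sigma> (t0 + h * x k)"
proof -
  assume k: "k \<in> {1..d}"
  have "(\<Sum>j=1..d. Wn d h sd A Vv 1 k j * x j) = (\<Sum>j=1..d. (if j = k then h else 0) * x j)"
    using k by (intro sum.cong) (auto simp: Wn_def)
  also have "\<dots> = h * x k" using k by (intro sum_delta_mult) auto
  finally have eq: "(\<Sum>j=1..d. Wn d h sd A Vv 1 k j * x j) = h * x k" .
  show ?thesis using k unfolding Y_1 eq by (simp add: bn_def add.commute)
qed

abbreviation "Dcl \<equiv> Dc h sd a0"

lemma Y1_G: "Y 1 (d+1) = \<sigma> t0"
proof -
  have "(\<Sum>j=1..d. Wn d h sd A Vv 1 (d+1) j * x j) = 0" by (simp add: Wn_def)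
  then show ?thesis unfolding Y_1 by (simp add: bn_def)
qed

lemma Y1_Z: "Y 1 (d+2) = \<sigma> (lf d (Vv 0) x + Bb 0)"
proof -
  have "(\<Sum>j=1..d. Wn d h sd A Vv 1 (d+2) j * x j) = lf d (Vv 0) x" by (simp add: Wn_def lf_def)
  then show ?thesis unfolding Y_1 by (simp add: bn_def)
qed

lemma YS_x:
  assumes l: "l \<ge> 1" and k: "k \<in> {1..d}"
  shows "Y (Suc l) k = \<sigma> (t0 + h * Dcl (Y l k))"
proof -
  have kp: "k \<in> {1..p}" using k p by auto
  have "(\<Sum>j=1..p. Wn d h sd A Vv (Suc l) k j * Y l j) = (\<Sum>j=1..p. (if j = k then 1/sd else 0) * Y l j)"
    using k l by (intro sum.cong) (auto simp: Wn_def)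
  also have "\<dots> = 1/sd * Y l k" using kp by (intro sum_delta_mult) auto
  finally have eq: "(\<Sum>j=1..p. Wn d h sd A Vv (Suc l) k j * Y l j) = 1/sd * Y l k" .
  have b: "bn d h sd t0 a0 Vv Bb (Suc l) k = t0 - a0/sd" using k l by (simp add: bn_def)
  have arg: "1/sd * Y l k + (t0 - a0/sd) = t0 + h * Dcl (Y l k)"
    using h sd unfolding Dc_def by (simp add: field_simps)
  show ?thesis unfolding Y_Suc[OF l] eq b arg ..
qed

lemma YS_G:
  assumes l: "l \<ge> 1"
  shows "Y (Suc l) (d+1) = \<sigma> (t0 + h * (Dcl (Y l (d+1)) + A (l-1) * Y l (d+2)))"
proof -
  have G: "d+1 \<in> {1..p}" "d+2 \<in> {1..p}" using p by auto
  have "(\<Sum>j=1..p. Wn d h sd A Vv (Suc l) (d+1) j * Y l j)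
      = (\<Sum>j=1..p. (if j = d+1 then 1/sd else 0) * Y l j + (if j = d+2 then h * A (l-1) else 0) * Y l j)"
    using l by (intro sum.cong) (auto simp: Wn_def)
  also have "\<dots> = 1/sd * Y l (d+1) + h * A (l-1) * Y l (d+2)"
    unfolding sum.distrib using G by (simp add: sum_delta_mult)
  finally have eq: "(\<Sum>j=1..p. Wn d h sd A Vv (Suc l) (d+1) j * Y l j) = 1/sd * Y l (d+1) + h * A (l-1) * Y l (d+2)" .
  have b: "bn d h sd t0 a0 Vv Bb (Suc l) (d+1) = t0 - a0/sd" using l by (simp add: bn_def)
  have arg: "1/sd * Y l (d+1) + h * A (l-1) * Y l (d+2) + (t0 - a0/sd) = t0 + h * (Dcl (Y l (d+1)) + A (l-1) * Y l (d+2))"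
    using h sd unfolding Dc_def by (simp add: field_simps)
  show ?thesis unfolding Y_Suc[OF l] eq b arg ..
qed

lemma YS_Z:
  assumes l: "l \<ge> 1"
  shows "Y (Suc l) (d+2) = \<sigma> (lf d (Vv l) (\<lambda>j. Dcl (Y l j)) + Bb l)"
proof -
  have sub: "{1..p} \<inter> {1..d} = {1..d}" using p by auto
  have "(\<Sum>j=1..p. Wn d h sd A Vv (Suc l) (d+2) j * Y l j)
      = (\<Sum>j=1..p. if j \<in> {1..d} then Vv l j / (h * sd) * Y l j else 0)"
    using l by (intro sum.cong) (auto simp: Wn_def)
  also have "\<dots> = (\<Sum>j=1..d. Vv l j / (h * sd) * Y l j)"
    unfolding sum.inter_restrict[symmetric, OF finite_atLeastAtMost] sub ..
  finally have eq: "(\<Sum>j=1..p. Wn d h sd A Vv (Suc l) (d+2) j * Y l j) = (\<Sum>j=1..d. Vv l j / (h * sd) * Y l j)" .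
  have b: "bn d h sd t0 a0 Vv Bb (Suc l) (d+2) = Bb l - (a0/(h * sd)) * (\<Sum>j=1..d. Vv l j)"
    using l by (simp add: bn_def)
  have 1: "lf d (Vv l) (\<lambda>j. Dcl (Y l j)) = (\<Sum>j=1..d. Vv l j / (h * sd) * Y l j) - (\<Sum>j=1..d. a0/(h * sd) * Vv l j)"
    unfolding lf_def Dc_def sum_subtractf[symmetric] by (rule sum.cong) (use h sd in \<open>simp_all add: field_simps\<close>)
  have arg: "(\<Sum>j=1..d. Vv l j / (h * sd) * Y l j) + (Bb l - (a0/(h * sd)) * (\<Sum>j=1..d. Vv l j))
       = lf d (Vv l) (\<lambda>j. Dcl (Y l j)) + Bb l"
    unfolding 1 sum_distrib_left by simp
  show ?thesis unfolding Y_Suc[OF l] eq b arg ..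
qed

end

declare hdann_layer.simps[simp del]

lemma tri3: "\<bar>a - c\<bar> \<le> \<bar>a - b\<bar> + \<bar>b - (c::real)\<bar>"
  using abs_triangle_ineq[of "a - b" "b - c"] by simp

lemma tri2: "\<bar>a::real\<bar> \<le> \<bar>a - b\<bar> + \<bar>b\<bar>"
  using abs_triangle_ineq[of "a - b" "b"] by simp

context
  fixes \<sigma> :: "real \<Rightarrow> real" and d p :: nat and h sd t0 a0 :: real
    and A Bb :: "nat \<Rightarrow> real" and Vv :: "nat \<Rightarrow> nat \<Rightarrow> real" and x :: "nat \<Rightarrow> real"
    and Rp \<delta> :: real
  assumes p: "p \<ge> d + 3" and h: "h \<noteq> 0" and sd: "sd \<noteq> 0" and a0: "a0 = \<sigma> t0"
    and psi: "\<And>u. \<bar>u\<bar> \<le> Rp \<Longrightarrow> \<bar>(\<sigma> (t0 + h * u) - a0) / (h * sd) - u\<bar> \<le> \<delta>"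
    and xc: "x \<in> unit_cube d" and Rp2: "Rp \<ge> 2"
begin

abbreviation "YY l \<equiv> hdann_layer \<sigma> d p (Wn d h sd A Vv) (bn d h sd t0 a0 Vv Bb) l x"
abbreviation "DD y \<equiv> (y - a0) / (h * sd)"

lemma delta0: "\<delta> \<ge> 0"
proof -
  have "\<bar>(\<sigma> (t0 + h * 0) - a0) / (h * sd) - 0\<bar> \<le> \<delta>" using Rp2 by (intro psi) simp
  then show ?thesis by (meson abs_ge_zero order_trans)
qed

lemma E1:
  assumes l: "l \<ge> 1" and ld: "l * \<delta> \<le> 1" and k: "k \<in> {1..d}"
  shows "\<bar>DD (YY l k) - x k\<bar> \<le> l * \<delta>"
  using l ld
proof (induction l rule: nat_induct_at_least)
  case base
  have xk: "\<bar>x k\<bar> \<le> 1" using xc k by (auto simp: unit_cube_def)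
  have "YY 1 k = \<sigma> (t0 + h * x k)" using Y1_x[OF p h sd k] .
  moreover have "\<bar>DD (\<sigma> (t0 + h * x k)) - x k\<bar> \<le> \<delta>" using xk Rp2 by (intro psi) simp
  ultimately show ?case by simp
next
  case (Suc l)
  have IH: "\<bar>DD (YY l k) - x k\<bar> \<le> l * \<delta>" using Suc delta0 by (intro Suc.IH) (auto simp: algebra_simps)
  have xk: "\<bar>x k\<bar> \<le> 1" using xc k by (auto simp: unit_cube_def)
  have "l * \<delta> \<le> 1" using Suc.prems delta0 by (simp add: algebra_simps)
  then have "\<bar>DD (YY l k)\<bar> \<le> Rp" using IH xk Rp2 tri2[of "DD (YY l k)" "x k"] by linarith
  then have ps: "\<bar>DD (\<sigma> (t0 + h * DD (YY l k))) - DD (YY l k)\<bar> \<le> \<delta>" by (rule psi)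
  have eq: "YY (Suc l) k = \<sigma> (t0 + h * DD (YY l k))" using YS_x[OF p h sd Suc.hyps k] by (simp add: Dc_def)
  have "\<bar>DD (YY (Suc l) k) - DD (YY l k)\<bar> \<le> \<delta>" using ps by (simp only: eq)
  then show ?case using IH tri3[of "DD (YY (Suc l) k)" "x k" "DD (YY l k)"] by (simp add: algebra_simps)
qed

lemma lf_diff: "lf d v u - lf d v x = (\<Sum>j=1..d. v j * (u j - x j))"
  by (simp add: lf_def sum_subtractf right_diff_distrib)

lemma E2:
  assumes l: "l \<ge> 1" "l * \<delta> \<le> 1"
    and VS: "(\<Sum>j=1..d. \<bar>Vv l j\<bar>) * (l * \<delta>) \<le> \<rho>"
    and uc: "\<forall>u v. \<bar>u\<bar> \<le> M \<longrightarrow> \<bar>v - u\<bar> \<le> \<rho> \<longrightarrow> \<bar>\<sigma> v - \<sigma> u\<bar> \<le> \<epsilon>1"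
    and M: "\<bar>lf d (Vv l) x + Bb l\<bar> \<le> M"
  shows "\<bar>YY (Suc l) (d+2) - \<sigma> (lf d (Vv l) x + Bb l)\<bar> \<le> \<epsilon>1"
proof -
  define U where "U = (\<lambda>j. DD (YY l j))"
  have eq: "YY (Suc l) (d+2) = \<sigma> (lf d (Vv l) U + Bb l)"
    using YS_Z[OF p h sd l(1)] by (simp add: Dc_def U_def)
  have "\<bar>(lf d (Vv l) U + Bb l) - (lf d (Vv l) x + Bb l)\<bar> = \<bar>\<Sum>j=1..d. Vv l j * (U j - x j)\<bar>"
    using lf_diff[of "Vv l" U] by simp
  also have "\<dots> \<le> (\<Sum>j=1..d. \<bar>Vv l j * (U j - x j)\<bar>)" by (rule sum_abs)
  also have "\<dots> \<le> (\<Sum>j=1..d. \<bar>Vv l j\<bar> * (l * \<delta>))"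
  proof (rule sum_mono)
    fix j assume j: "j \<in> {1..d}"
    have "\<bar>U j - x j\<bar> \<le> l * \<delta>" unfolding U_def using E1[OF l j] by simp
    then show "\<bar>Vv l j * (U j - x j)\<bar> \<le> \<bar>Vv l j\<bar> * (l * \<delta>)"
      by (simp add: abs_mult mult_left_mono)
  qed
  also have "\<dots> = (\<Sum>j=1..d. \<bar>Vv l j\<bar>) * (l * \<delta>)" by (simp add: sum_distrib_right)
  also have "\<dots> \<le> \<rho>" by (rule VS)
  finally have "\<bar>(lf d (Vv l) U + Bb l) - (lf d (Vv l) x + Bb l)\<bar> \<le> \<rho>" .
  then show ?thesis unfolding eq using uc M by blast
qed

lemma E3:
  assumes Am: "\<forall>i<n. \<bar>A i\<bar> \<le> Amax" and SA: "(\<Sum>i<n. \<bar>A i\<bar>) \<le> SA"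
    and Rp: "Rp \<ge> SA + Amax + 1" and ne: "n * (\<delta> + Amax * \<epsilon>1) \<le> 1"
    and sb: "\<forall>t. \<bar>\<sigma> t\<bar> \<le> 1" and e1: "\<epsilon>1 \<ge> 0" and Am0: "Amax \<ge> 0"
    and Zerr: "\<forall>l. 1 \<le> l \<longrightarrow> l < n \<longrightarrow> \<bar>YY (Suc l) (d+2) - \<sigma> (lf d (Vv l) x + Bb l)\<bar> \<le> \<epsilon>1"
  shows "m \<le> n \<Longrightarrow> \<bar>DD (YY (Suc m) (d+1)) - (\<Sum>i<m. A i * \<sigma> (lf d (Vv i) x + Bb i))\<bar> \<le> m * (\<delta> + Amax * \<epsilon>1)"
proof (induction m)
  case 0
  have "YY 1 (d+1) = \<sigma> t0" by (rule Y1_G[OF p h sd])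
  then show ?case using a0 by simp
next
  case (Suc m)
  define e0 where "e0 = \<delta> + Amax * \<epsilon>1"
  have e0: "e0 \<ge> 0" using delta0 e1 Am0 by (simp add: e0_def)
  define T where "T = (\<Sum>i<m. A i * \<sigma> (lf d (Vv i) x + Bb i))"
  define g where "g = DD (YY (Suc m) (d+1))"
  define z where "z = YY (Suc m) (d+2)"
  define sm where "sm = \<sigma> (lf d (Vv m) x + Bb m)"
  have mn: "m < n" "m \<le> n" using Suc.prems by auto
  have IH: "\<bar>g - T\<bar> \<le> m * e0" using Suc.IH mn unfolding g_def T_def e0_def by simp
  have me0: "m * e0 \<le> 1"
  proof -
    have "m * e0 \<le> n * e0" using mn e0 by (intro mult_right_mono) auto
    then show ?thesis using ne by (simp add: e0_def)
  qed
  have zerr: "\<bar>z - sm\<bar> \<le> \<epsilon>1"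
  proof (cases "m = 0")
    case True
    have "YY 1 (d+2) = \<sigma> (lf d (Vv 0) x + Bb 0)" by (rule Y1_Z[OF p h sd])
    then show ?thesis using True e1 by (simp add: z_def sm_def)
  next
    case False
    then show ?thesis using Zerr mn unfolding z_def sm_def by simp
  qed
  have z1: "\<bar>z\<bar> \<le> 1" using sb unfolding z_def YS_Z by (metis Y_1 Y_Suc One_nat_def hdann_layer.simps(2))
  have Tb: "\<bar>T\<bar> \<le> SA"
  proof -
    have "\<bar>T\<bar> \<le> (\<Sum>i<m. \<bar>A i * \<sigma> (lf d (Vv i) x + Bb i)\<bar>)" unfolding T_def by (rule sum_abs)
    also have "\<dots> \<le> (\<Sum>i<m. \<bar>A i\<bar>)"
      by (rule sum_mono) (use sb in \<open>simp add: abs_mult mult_left_le\<close>)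
    also have "\<dots> \<le> (\<Sum>i<n. \<bar>A i\<bar>)" using mn by (intro sum_mono2) auto
    finally show ?thesis using SA by linarith
  qed
  define w where "w = g + A m * z"
  have Amz: "\<bar>A m * z\<bar> \<le> Amax"
  proof -
    have "\<bar>A m * z\<bar> = \<bar>A m\<bar> * \<bar>z\<bar>" by (simp add: abs_mult)
    also have "\<dots> \<le> Amax * 1" using Am mn z1 by (intro mult_mono) auto
    finally show ?thesis by simp
  qed
  have gb: "\<bar>g\<bar> \<le> SA + 1" using tri2[of g T] IH me0 Tb by linarith
  have wR: "\<bar>w\<bar> \<le> Rp" using abs_triangle_ineq[of g "A m * z"] gb Amz Rp unfolding w_def by linarith
  have ps: "\<bar>DD (\<sigma> (t0 + h * w)) - w\<bar> \<le> \<delta>" using psi[OF wR] .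
  have eq: "YY (Suc (Suc m)) (d+1) = \<sigma> (t0 + h * w)"
    using YS_G[OF p h sd, of "Suc m"] by (simp add: Dc_def w_def g_def z_def)
  have T1: "(\<Sum>i<Suc m. A i * \<sigma> (lf d (Vv i) x + Bb i)) = T + A m * sm"
    by (simp add: T_def sm_def)
  have wT: "\<bar>w - (T + A m * sm)\<bar> \<le> m * e0 + Amax * \<epsilon>1"
  proof -
    have "w - (T + A m * sm) = (g - T) + A m * (z - sm)" by (simp add: w_def algebra_simps)
    then have "\<bar>w - (T + A m * sm)\<bar> \<le> \<bar>g - T\<bar> + \<bar>A m * (z - sm)\<bar>" by (metis abs_triangle_ineq)
    moreover have "\<bar>A m * (z - sm)\<bar> \<le> Amax * \<epsilon>1"
      unfolding abs_mult using Am mn zerr Am0 by (intro mult_mono) auto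
    ultimately show ?thesis using IH by linarith
  qed
  have "\<bar>DD (YY (Suc (Suc m)) (d+1)) - (T + A m * sm)\<bar> \<le> \<delta> + (m * e0 + Amax * \<epsilon>1)"
    unfolding eq using tri3[of "DD (\<sigma> (t0 + h * w))" "T + A m * sm" w] ps wT by linarith
  also have "\<dots> = Suc m * e0" by (simp add: e0_def algebra_simps)
  finally show ?case unfolding T1 e0_def .
qed

end

lemma psi_close:
  fixes \<sigma> :: "real \<Rightarrow> real"
  assumes D: "(\<sigma> has_real_derivative sd) (at t0)" and sd: "sd \<noteq> 0" and Rp: "Rp > 0" and dl: "\<delta> > 0"
  shows "\<exists>h>0. \<forall>u. \<bar>u\<bar> \<le> Rp \<longrightarrow> \<bar>(\<sigma> (t0 + h * u) - \<sigma> t0) / (h * sd) - u\<bar> \<le> \<delta>"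
proof -
  define e' where "e' = \<delta> * \<bar>sd\<bar> / Rp"
  have e': "e' > 0" using dl sd Rp by (simp add: e'_def)
  have "(\<lambda>v. (\<sigma> (t0 + v) - \<sigma> t0) / v) \<midarrow>0\<rightarrow> sd" using D by (simp add: DERIV_def)
  from LIM_D[OF this e'] obtain \<eta> where eta: "\<eta> > 0"
    and L: "\<forall>v. v \<noteq> 0 \<and> norm (v - 0) < \<eta> \<longrightarrow> norm ((\<sigma> (t0 + v) - \<sigma> t0) / v - sd) < e'" by blast
  define h where "h = \<eta> / (2 * Rp)"
  have h: "h > 0" using eta Rp by (simp add: h_def)
  show ?thesis
  proof (intro exI[of _ h] conjI allI impI h)
    fix u assume u: "\<bar>u\<bar> \<le> Rp"
    show "\<bar>(\<sigma> (t0 + h * u) - \<sigma> t0) / (h * sd) - u\<bar> \<le> \<delta>"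
    proof (cases "u = 0")
      case True then show ?thesis using dl by simp
    next
      case False
      define v where "v = h * u"
      have v0: "v \<noteq> 0" using False h by (simp add: v_def)
      have "\<bar>v\<bar> = h * \<bar>u\<bar>" using h by (simp add: v_def abs_mult)
      also have "\<dots> \<le> h * Rp" using u h by (simp add: mult_left_mono)
      also have "\<dots> = \<eta> / 2" using Rp by (simp add: h_def)
      finally have "\<bar>v\<bar> < \<eta>" using eta by linarith
      then have Q: "\<bar>(\<sigma> (t0 + v) - \<sigma> t0) / v - sd\<bar> < e'" using L v0 by simp
      define Q where "Q = (\<sigma> (t0 + v) - \<sigma> t0) / v"
      have eq: "(\<sigma> (t0 + h * u) - \<sigma> t0) / (h * sd) - u = u * (Q - sd) / sd"
        unfolding Q_def v_def using h sd False by (simp add: field_simps)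
      have "\<bar>u * (Q - sd) / sd\<bar> = \<bar>u\<bar> * \<bar>Q - sd\<bar> / \<bar>sd\<bar>" by (simp add: abs_mult)
      also have "\<dots> \<le> Rp * e' / \<bar>sd\<bar>"
        using u Q Q_def sd by (intro divide_right_mono mult_mono) auto
      also have "\<dots> = \<delta>" using Rp sd by (simp add: e'_def)
      finally show ?thesis unfolding eq .
    qed
  qed
qed

lemma netd_nth:
  "netd \<sigma> d xs x = (\<Sum>i<length xs. fst (xs!i) * \<sigma> (lf d (fst (snd (xs!i))) x + snd (snd (xs!i))))"
  unfolding netd_def sum_list_sum_nth by (simp add: atLeast0LessThan case_prod_beta)

theorem theorem3:
  fixes d p :: nat
    and B :: "nat \<Rightarrow> nat \<Rightarrow> real \<Rightarrow> real"
    and \<sigma> :: "real \<Rightarrow> real"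
    and f :: "(nat \<Rightarrow> real) \<Rightarrow> real"
    and \<epsilon> :: real
  assumes d: "d \<ge> 1"
    and p: "p \<ge> d + 3"
    and basis: "\<forall>k\<in>{1..p}. basis_functions (B k)"
    and sigma_cont: "continuous_on UNIV \<sigma>"
    and sigma_range: "\<forall>t. 0 \<le> \<sigma> t \<and> \<sigma> t \<le> 1"
    and sigma_diff: "\<exists>t0 \<sigma>' e. e > 0 \<and> (\<forall>t\<in>ball t0 e. (\<sigma> has_real_derivative \<sigma>' t) (at t))
                        \<and> isCont \<sigma>' t0 \<and> \<sigma>' t0 \<noteq> 0"
    and f_cont: "continuous_on (unit_cube d) f"
    and eps: "\<epsilon> > 0"
  shows "\<exists>L\<ge>1. \<exists>(q::nat \<Rightarrow> nat) W bb c b. (\<forall>k\<in>{1..p}. q k \<ge> 1) \<and>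
           (\<exists>\<delta><\<epsilon>. \<forall>x\<in>unit_cube d. \<bar>f x - hdann2 \<sigma> d p B L W bb q c b x\<bar> \<le> \<delta>)"
proof -
  obtain t0 \<sigma>' e where e: "e > 0" and dd: "\<forall>t\<in>ball t0 e. (\<sigma> has_real_derivative \<sigma>' t) (at t)"
    and s0: "\<sigma>' t0 \<noteq> 0" using sigma_diff by blast
  define sd where "sd = \<sigma>' t0"
  have D: "(\<sigma> has_real_derivative sd) (at t0)" using dd e by (simp add: sd_def)
  have sd: "sd \<noteq> 0" using s0 by (simp add: sd_def)
  have sc: "\<forall>t. isCont \<sigma> t" using sigma_cont by (simp add: continuous_on_eq_continuous_at)
  have sb: "\<forall>t. \<bar>\<sigma> t\<bar> \<le> 1" using sigma_range by (simp add: abs_le_iff)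
  have nc: "\<exists>a b. \<sigma> a \<noteq> \<sigma> b"
  proof (rule ccontr)
    assume "\<not> ?thesis"
    then have "\<sigma> = (\<lambda>_. \<sigma> t0)" by auto
    then have "(\<sigma> has_real_derivative 0) (at t0)" by (metis DERIV_const)
    then show False using DERIV_unique[OF D] sd by simp
  qed
  then obtain a b where nc: "\<sigma> a \<noteq> \<sigma> b" by blast
  have "KK \<sigma> d f" by (rule KK_all[OF sc sb nc f_cont])
  then obtain c xs where cx: "\<forall>x\<in>unit_cube d. \<bar>f x - (c + netd \<sigma> d xs x)\<bar> \<le> \<epsilon>/4"
    using eps unfolding KK_def by (meson divide_pos_pos zero_less_numeral)
  define n where "n = length xs"
  define A where "A i = (if i < n then fst (xs!i) else 0)" for i
  define Vv where "Vv i = fst (snd (xs!i))" for i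
  define Bb where "Bb i = snd (snd (xs!i))" for i
  have netd_eq: "netd \<sigma> d xs x = (\<Sum>i<n. A i * \<sigma> (lf d (Vv i) x + Bb i))" for x
    unfolding netd_nth n_def A_def Vv_def Bb_def by (rule sum.cong) auto
  define SA where "SA = (\<Sum>i<n. \<bar>A i\<bar>)"
  define Amax where "Amax = SA + 1"
  have SA0: "SA \<ge> 0" unfolding SA_def by (simp add: sum_nonneg)
  have Am: "\<forall>i<n. \<bar>A i\<bar> \<le> Amax"
  proof (intro allI impI)
    fix i assume "i < n"
    then have "\<bar>A i\<bar> \<le> SA" unfolding SA_def by (intro member_le_sum) auto
    then show "\<bar>A i\<bar> \<le> Amax" by (simp add: Amax_def)
  qed
  have Am0: "Amax \<ge> 0" using SA0 by (simp add: Amax_def)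
  define VS where "VS = (\<Sum>l<n. \<Sum>j=1..d. \<bar>Vv l j\<bar>) + 1"
  have VS1: "VS \<ge> 1" unfolding VS_def by (simp add: sum_nonneg)
  have VSl: "(\<Sum>j=1..d. \<bar>Vv l j\<bar>) \<le> VS" if "l < n" for l
  proof -
    have "(\<Sum>j=1..d. \<bar>Vv l j\<bar>) \<le> (\<Sum>l<n. \<Sum>j=1..d. \<bar>Vv l j\<bar>)"
      using that by (intro member_le_sum) (auto simp: sum_nonneg)
    then show ?thesis by (simp add: VS_def)
  qed
  define M where "M = (\<Sum>l<n. (\<Sum>j=1..d. \<bar>Vv l j\<bar>) + \<bar>Bb l\<bar>) + 1"
  have Ml: "\<bar>lf d (Vv l) x + Bb l\<bar> \<le> M" if "l < n" "x \<in> unit_cube d" for l x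
  proof -
    have "\<bar>lf d (Vv l) x + Bb l\<bar> \<le> \<bar>lf d (Vv l) x\<bar> + \<bar>Bb l\<bar>" by (rule abs_triangle_ineq)
    also have "\<dots> \<le> (\<Sum>j=1..d. \<bar>Vv l j\<bar>) + \<bar>Bb l\<bar>" using lf_bound[OF that(2)] by simp
    also have "\<dots> \<le> (\<Sum>l<n. (\<Sum>j=1..d. \<bar>Vv l j\<bar>) + \<bar>Bb l\<bar>)"
      using that by (intro member_le_sum) (auto simp: sum_nonneg add_nonneg_nonneg)
    finally show ?thesis by (simp add: M_def)
  qed
  define e' where "e' = min \<epsilon> 1"
  have e': "e' > 0" "e' \<le> \<epsilon>" "e' \<le> 1" using eps by (auto simp: e'_def)
  define \<epsilon>1 where "\<epsilon>1 = e' / (8 * (n+1) * (Amax+1))"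
  have e1: "\<epsilon>1 > 0" using e' Am0 by (simp add: \<epsilon>1_def)
  have "uniformly_continuous_on {-M-1..M+1} \<sigma>"
    by (rule compact_uniformly_continuous) (auto intro: continuous_on_subset[OF sigma_cont])
  then obtain \<rho>0 where r0: "\<rho>0 > 0" and
    rr: "\<And>u v. u \<in> {-M-1..M+1} \<Longrightarrow> v \<in> {-M-1..M+1} \<Longrightarrow> dist v u < \<rho>0 \<Longrightarrow> dist (\<sigma> v) (\<sigma> u) < \<epsilon>1"
    unfolding uniformly_continuous_on_def using e1 by metis
  define \<rho> where "\<rho> = min (\<rho>0/2) 1"
  have rho: "\<rho> > 0" "\<rho> \<le> 1" "\<rho> < \<rho>0" using r0 by (auto simp: \<rho>_def)
  have uc: "\<forall>u v. \<bar>u\<bar> \<le> M \<longrightarrow> \<bar>v - u\<bar> \<le> \<rho> \<longrightarrow> \<bar>\<sigma> v - \<sigma> u\<bar> \<le> \<epsilon>1"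
  proof (intro allI impI)
    fix u v :: real assume u: "\<bar>u\<bar> \<le> M" and v: "\<bar>v - u\<bar> \<le> \<rho>"
    have uin: "u \<in> {-M-1..M+1}" using u by (auto simp: abs_le_iff)
    have vin: "v \<in> {-M-1..M+1}" using u v rho by (auto simp: abs_le_iff)
    have "dist v u < \<rho>0" using v rho by (simp add: dist_real_def)
    then show "\<bar>\<sigma> v - \<sigma> u\<bar> \<le> \<epsilon>1" using rr[OF uin vin] by (simp add: dist_real_def)
  qed
  define \<delta> where "\<delta> = e' * \<rho> / (8 * (n+1) * VS)"
  have dl: "\<delta> > 0" using e' rho VS1 by (simp add: \<delta>_def)
  have nd: "n * \<delta> * VS \<le> e' * \<rho> / 8"
  proof -
    have VS0: "VS \<noteq> 0" using VS1 by simp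
    have "\<delta> * VS = e' * \<rho> / (8 * (n+1))" using VS0 by (simp add: \<delta>_def)
    then have "n * \<delta> * VS = n * (e' * \<rho> / (8 * (n+1)))" by (simp add: mult.assoc)
    also have "\<dots> = (n / (n+1)) * (e' * \<rho> / 8)" by (simp add: mult_ac)
    finally have "n * \<delta> * VS = (n / (n+1)) * (e' * \<rho> / 8)" .
    also have "\<dots> \<le> 1 * (e' * \<rho> / 8)" using e' rho by (intro mult_right_mono) auto
    finally show ?thesis by simp
  qed
  have nd2: "n * \<delta> \<le> e' / 8"
  proof -
    have "n * \<delta> \<le> n * \<delta> * VS" using mult_left_mono[OF VS1, of "n * \<delta>"] dl by simp
    also have "\<dots> \<le> e' * \<rho> / 8" by (rule nd)
    also have "\<dots> \<le> e' * 1 / 8" using e' rho by (intro divide_right_mono mult_left_mono) auto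
    finally show ?thesis by simp
  qed
  have ne1: "n * (Amax * \<epsilon>1) \<le> e' / 8"
  proof -
    have "n * (Amax * \<epsilon>1) = (n / (n+1)) * (Amax / (Amax+1)) * (e' / 8)"
      by (simp add: \<epsilon>1_def mult_ac)
    also have "\<dots> \<le> 1 * 1 * (e' / 8)" using e' Am0 by (intro mult_mono) auto
    finally show ?thesis by simp
  qed
  have ne: "n * (\<delta> + Amax * \<epsilon>1) \<le> e' / 4" using nd2 ne1 by (simp add: distrib_left)
  define Rp where "Rp = SA + Amax + 3"
  have Rp: "Rp > 0" "Rp \<ge> 2" "Rp \<ge> SA + Amax + 1" using SA0 Am0 by (auto simp: Rp_def)
  obtain h where h: "h > 0" and psi: "\<forall>u. \<bar>u\<bar> \<le> Rp \<longrightarrow> \<bar>(\<sigma> (t0 + h * u) - \<sigma> t0) / (h * sd) - u\<bar> \<le> \<delta>"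
    using psi_close[OF D sd Rp(1) dl] by blast
  have h0: "h \<noteq> 0" using h by simp
  define \<phi> where "\<phi> y = (y - \<sigma> t0) / (h * sd)" for y
  have \<phi>c: "continuous_on {0..1} \<phi>" unfolding \<phi>_def by (intro continuous_intros) (use h sd in auto)
  have Gp: "d+1 \<in> {1..p}" using p by auto
  obtain qG cG c0 \<delta>b where qG: "qG \<ge> 1" and db: "\<delta>b < \<epsilon>/4"
    and bapp: "\<forall>y\<in>{0..1::real}. \<bar>\<phi> y - ((\<Sum>r=1..qG. cG r * B (d+1) r y) + c0)\<bar> \<le> \<delta>b"
    using basis Gp \<phi>c eps unfolding basis_functions_def by (meson divide_pos_pos zero_less_numeral)
  define W where "W = Wn d h sd A Vv"
  define bb where "bb = bn d h sd t0 (\<sigma> t0) Vv Bb"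
  define qq where "qq k = (if k = d+1 then qG else 1)" for k
  define cc where "cc k r = (if k = d+1 then cG r else 0)" for k r
  define b0 where "b0 = c0 + c"
  have q1: "\<forall>k\<in>{1..p}. qq k \<ge> 1" using qG by (simp add: qq_def)
  have dd: "\<epsilon>/2 + \<delta>b < \<epsilon>" using db eps by linarith
  have main: "\<forall>x\<in>unit_cube d. \<bar>f x - hdann2 \<sigma> d p B (Suc n) W bb qq cc b0 x\<bar> \<le> \<epsilon>/2 + \<delta>b"
  proof
    fix x assume x: "x \<in> unit_cube d"
    define Yl where "Yl = hdann_layer \<sigma> d p W bb (Suc n) x (d+1)"
    have Y01: "Yl \<in> {0..1}" using sigma_range unfolding Yl_def by (simp add: hdann_layer.simps)
    have out: "hdann2 \<sigma> d p B (Suc n) W bb qq cc b0 x = (\<Sum>r=1..qG. cG r * B (d+1) r Yl) + c0 + c"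
    proof -
      have "(\<Sum>k=1..p. \<Sum>r=1..qq k. cc k r * B k r (hdann_layer \<sigma> d p W bb (Suc n) x k))
          = (\<Sum>k=1..p. if k = d+1 then (\<Sum>r=1..qG. cG r * B (d+1) r Yl) else 0)"
        by (rule sum.cong) (auto simp: qq_def cc_def Yl_def)
      also have "\<dots> = (\<Sum>r=1..qG. cG r * B (d+1) r Yl)" using Gp by (simp add: sum.delta)
      finally show ?thesis unfolding hdann2_def b0_def by simp
    qed
    have Zerr: "\<forall>l. 1 \<le> l \<longrightarrow> l < n \<longrightarrow> \<bar>hdann_layer \<sigma> d p W bb (Suc l) x (d+2) - \<sigma> (lf d (Vv l) x + Bb l)\<bar> \<le> \<epsilon>1"
    proof (intro allI impI)
      fix l assume l1: "1 \<le> l" and ln: "l < n"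
      have ld: "l * \<delta> \<le> n * \<delta>" using ln dl by (intro mult_right_mono) auto
      have ld1: "l * \<delta> \<le> 1" using ld nd2 e' by linarith
      have "(\<Sum>j=1..d. \<bar>Vv l j\<bar>) * (l * \<delta>) \<le> VS * (n * \<delta>)"
        using VSl[OF ln] ld dl VS1 by (intro mult_mono) (auto simp: sum_nonneg)
      also have "\<dots> \<le> e' * \<rho> / 8" using nd by (simp add: mult_ac)
      also have "\<dots> \<le> \<rho>" using e' rho by (simp add: field_simps)
      finally have VSc: "(\<Sum>j=1..d. \<bar>Vv l j\<bar>) * (l * \<delta>) \<le> \<rho>" .
      show "\<bar>hdann_layer \<sigma> d p W bb (Suc l) x (d+2) - \<sigma> (lf d (Vv l) x + Bb l)\<bar> \<le> \<epsilon>1"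
        unfolding W_def bb_def
        by (rule E2[where ?\<sigma>=\<sigma> and ?t0.0=t0 and ?a0.0="\<sigma> t0" and ?d=d and ?p=p and ?h=h and ?sd=sd and ?A=A and ?Bb=Bb and ?Vv=Vv and ?x=x and ?Rp=Rp and ?\<delta>=\<delta> and ?l=l and ?\<rho>=\<rho> and ?M=M and ?\<epsilon>1.0=\<epsilon>1, OF p h0 sd refl _ x Rp(2) l1 ld1 VSc uc Ml[OF ln x]]) (use psi in blast)
    qed
    have psi': "\<And>u. \<bar>u\<bar> \<le> Rp \<Longrightarrow> \<bar>(\<sigma> (t0 + h * u) - \<sigma> t0) / (h * sd) - u\<bar> \<le> \<delta>" using psi by blast
    have SA': "(\<Sum>i<n. \<bar>A i\<bar>) \<le> SA" by (simp add: SA_def)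
    have ne': "n * (\<delta> + Amax * \<epsilon>1) \<le> 1" using ne e' by linarith
    have e1': "\<epsilon>1 \<ge> 0" using e1 by simp
    have Zerr': "\<forall>l. 1 \<le> l \<longrightarrow> l < n \<longrightarrow> \<bar>hdann_layer \<sigma> d p (Wn d h sd A Vv) (bn d h sd t0 (\<sigma> t0) Vv Bb) (Suc l) x (d+2) - \<sigma> (lf d (Vv l) x + Bb l)\<bar> \<le> \<epsilon>1"
      using Zerr unfolding W_def bb_def .
    have G: "\<bar>(Yl - \<sigma> t0) / (h * sd) - (\<Sum>i<n. A i * \<sigma> (lf d (Vv i) x + Bb i))\<bar> \<le> n * (\<delta> + Amax * \<epsilon>1)"
      unfolding Yl_def W_def bb_def
      by (rule E3[where ?\<sigma>=\<sigma> and ?t0.0=t0 and ?a0.0="\<sigma> t0" and ?d=d and ?p=p and ?h=h and ?sd=sd and ?A=A and ?Bb=Bb and ?Vv=Vv and ?x=x and ?Rp=Rp and ?\<delta>=\<delta> and ?n=n and ?Amax=Amax and ?SA=SA and ?\<epsilon>1.0=\<epsilon>1 and ?m=n, OF p h0 sd refl psi' x Rp(2) Am SA' Rp(3) ne' sb e1' Am0 Zerr' order_refl])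

    have bY: "\<bar>\<phi> Yl - ((\<Sum>r=1..qG. cG r * B (d+1) r Yl) + c0)\<bar> \<le> \<delta>b" using bapp Y01 by blast
    have fc: "\<bar>f x - (c + (\<Sum>i<n. A i * \<sigma> (lf d (Vv i) x + Bb i)))\<bar> \<le> \<epsilon>/4" using cx x netd_eq by simp
    have G': "\<bar>\<phi> Yl - (\<Sum>i<n. A i * \<sigma> (lf d (Vv i) x + Bb i))\<bar> \<le> \<epsilon>/4"
      using G ne e' unfolding \<phi>_def by linarith
    define S where "S = (\<Sum>i<n. A i * \<sigma> (lf d (Vv i) x + Bb i))"
    define Ov where "Ov = (\<Sum>r=1..qG. cG r * B (d+1) r Yl)"
    have eqn: "f x - hdann2 \<sigma> d p B (Suc n) W bb qq cc b0 x = (f x - (c + S)) + (S - \<phi> Yl) + (\<phi> Yl - (Ov + c0))"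
      unfolding out Ov_def S_def by simp
    have "\<bar>f x - hdann2 \<sigma> d p B (Suc n) W bb qq cc b0 x\<bar> = \<bar>(f x - (c + S)) + (S - \<phi> Yl) + (\<phi> Yl - (Ov + c0))\<bar>"
      by (simp only: eqn)
    also have "\<dots> \<le> \<bar>(f x - (c + S)) + (S - \<phi> Yl)\<bar> + \<bar>\<phi> Yl - (Ov + c0)\<bar>" by (rule abs_triangle_ineq)
    also have "\<dots> \<le> \<bar>f x - (c + S)\<bar> + \<bar>S - \<phi> Yl\<bar> + \<bar>\<phi> Yl - (Ov + c0)\<bar>"
      by (rule add_right_mono) (rule abs_triangle_ineq)
    finally have "\<bar>f x - hdann2 \<sigma> d p B (Suc n) W bb qq cc b0 x\<bar> \<le> \<bar>f x - (c + S)\<bar> + \<bar>S - \<phi> Yl\<bar> + \<bar>\<phi> Yl - (Ov + c0)\<bar>" .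
    moreover have "\<bar>S - \<phi> Yl\<bar> \<le> \<epsilon>/4" using G' unfolding S_def by (simp add: abs_minus_commute)
    ultimately show "\<bar>f x - hdann2 \<sigma> d p B (Suc n) W bb qq cc b0 x\<bar> \<le> \<epsilon>/2 + \<delta>b"
      using fc bY unfolding S_def Ov_def by linarith
  qed
  show ?thesis
    apply (rule exI[of _ "Suc n"])
    apply (rule conjI, simp)
    apply (rule exI[of _ qq], rule exI[of _ W], rule exI[of _ bb], rule exI[of _ cc], rule exI[of _ b0])
    apply (rule conjI, rule q1)
    apply (rule exI[of _ "\<epsilon>/2 + \<delta>b"])
    apply (rule conjI, rule dd)
    apply (rule main)
    done
qed

end
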